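(* Let $1>\delta_1>\delta_2\ge0$ with $\delta_2\le\frac12$. Let $\xi_0^-$ and $\eta_0$ be two boundary configurations for the S6V model with $\xi_0^-\ge\eta_0$, and let $v_0$ be a boundary vertex such that neither $\xi_0^-$ nor $\eta_0$ has an arrow incoming from $v_0$. Then there is a coupling of the S6V models $\xi^-$ and $\eta$ (with boundary data $\xi_0^-$, $\eta_0$), together with their second class particles $Q_{\xi^-}$ and $Q_\eta$ started at $v_0$, such that almost surely, for every $n$, $Q_{\xi^-}$ intersects the line $\{(x,y):x+y=n\}$ weakly to the southeast of the point where $Q_\eta$ intersects it.
   Context: S6V model: vertices $(i,j)\in\mathbb{Z}_{>0}^2$ with incoming edges from the left and from below and outgoing edges to the right and upward. Boundary vertices are $(0,j)$, $j\ge1$, and $(i,0)$, $i\ge1$; boundary data specify which edges $(0,j)\to(1,j)$ and $(i,0)\to(i,1)$ carry an incoming arrow ("arrow incoming from" the corresponding boundary vertex). Vertices are sampled on antidiagonals $i+j=n$ successively: none in gives none out; two in gives both out; a single arrow from below exits up with probability $\delta_1$, right with probability $1-\delta_1$; a single arrow from the left exits right with probability $\delta_2$, up with probability $1-\delta_2$. For boundary configurations, $\xi_0\ge\eta_0$ means every boundary arrow of $\eta_0$ is also present in $\xi_0$. Second class particle: given boundary data $\xi_0$ with no arrow from boundary vertex $v_0$, let $\xi_0^+$ be $\xi_0$ with an arrow added from $v_0$; sample both models with the basic coupling (at each vertex use the same Bernoulli($\delta_1$) variable to decide a lone vertically-entering arrow and the same Bernoulli($\delta_2$) variable to decide a lone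 horizontally-entering arrow). Then the $\xi_0^+$ configuration dominates the $\xi_0$ configuration edgewise, and the edges present in the former but not the latter form a single up-right path $Q$ from $v_0$, the second class particle of the S6V model with boundary data $\xi_0$. *)

theory Defs
  imports "HOL-Probability.Probability"
begin

text \<open>Boundary vertices: (0,j) with j \<ge> 1 and (i,0) with i \<ge> 1.
  A boundary configuration is the set of boundary vertices from which an arrow
  is incoming (along (0,j)->(1,j), resp. (i,0)->(i,1)).\<close>

definition boundary_vertices :: "(nat \<times> nat) set" where
  "boundary_vertices = {(0,j) | j. j \<ge> 1} \<union> {(i,0) | i. i \<ge> 1}"

definition boundary_config :: "(nat \<times> nat) set \<Rightarrow> bool" where
  "boundary_config B \<longleftrightarrow> B \<subseteq> boundary_vertices"

text \<open>Randomness (b1,b2): b1 ~ Bernoulli(delta1) decides a lone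
  arrow entering from below (exits up iff b1), b2 ~ Bernoulli(delta2) decides a lone
  arrow entering from the left (exits right iff b2).
  Arguments: l = arrow incoming from the left, d = arrow incoming from below.
  Result: (arrow out to the right, arrow out upward).\<close>

fun s6v_rule :: "bool \<times> bool \<Rightarrow> bool \<Rightarrow> bool \<Rightarrow> bool \<times> bool" where
  "s6v_rule (b1, b2) l d =
     (if l \<and> d then (True, True)
      else if d then (\<not> b1, b1)
      else if l then (b2, \<not> b2)
      else (False, False))"

text \<open>Outgoing arrows (right, up) at vertex (i,j), i,j \<ge> 1, given boundary data B and
  the randomness field \<omega>. Junk value (False,False) when i = 0 or j = 0.\<close>

function s6v_out :: "(nat \<times> nat) set \<Rightarrow> (nat \<times> nat \<Rightarrow> bool \<times> bool) \<Rightarrow> nat \<times> nat \<Rightarrow> bool \<times> bool" where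
  "s6v_out B \<omega> (i, j) =
     (if i = 0 \<or> j = 0 then (False, False)
      else s6v_rule (\<omega> (i, j))
             (if i = 1 then (0, j) \<in> B else fst (s6v_out B \<omega> (i - 1, j)))
             (if j = 1 then (i, 0) \<in> B else snd (s6v_out B \<omega> (i, j - 1))))"
  by pat_completeness auto
termination
  by (relation "Wellfounded.measure (\<lambda>(B, \<omega>, (i, j)). i + j)") auto

definition s6v_edges :: "(nat \<times> nat) set \<Rightarrow> (nat \<times> nat \<Rightarrow> bool \<times> bool) \<Rightarrow> ((nat \<times> nat) \<times> (nat \<times> nat)) set" where
  "s6v_edges B c =
     {((0, j), (1, j)) | j. (0, j) \<in> B} \<union> {((i, 0), (i, 1)) | i. (i, 0) \<in> B}
     \<union> {((i, j), (i + 1, j)) | i j. i \<ge> 1 \<and> j \<ge> 1 \<and> fst (c (i, j))}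
     \<union> {((i, j), (i, j + 1)) | i j. i \<ge> 1 \<and> j \<ge> 1 \<and> snd (c (i, j))}"

text \<open>Vertices of the second class particle path Q: endpoints of edges present in the
  configuration (B', c') (the one with the extra boundary arrow) but not in (B, c).\<close>

definition scp_vertices :: "(nat \<times> nat) set \<Rightarrow> (nat \<times> nat \<Rightarrow> bool \<times> bool)
    \<Rightarrow> (nat \<times> nat) set \<Rightarrow> (nat \<times> nat \<Rightarrow> bool \<times> bool) \<Rightarrow> (nat \<times> nat) set" where
  "scp_vertices B c B' c' = {u. \<exists>e \<in> s6v_edges B' c' - s6v_edges B c. u = fst e \<or> u = snd e}"

definition rand_space :: "real \<Rightarrow> real \<Rightarrow> (nat \<times> nat \<Rightarrow> bool \<times> bool) measure" where
  "rand_space \<delta>1 \<delta>2 =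
     PiM UNIV (\<lambda>_. measure_pmf (pair_pmf (bernoulli_pmf \<delta>1) (bernoulli_pmf \<delta>2)))"

definition cfg_space :: "(nat \<times> nat \<Rightarrow> bool \<times> bool) measure" where
  "cfg_space = PiM UNIV (\<lambda>_. count_space UNIV)"

definition basic_coupling :: "real \<Rightarrow> real \<Rightarrow> (nat \<times> nat) set \<Rightarrow> (nat \<times> nat) set
    \<Rightarrow> ((nat \<times> nat \<Rightarrow> bool \<times> bool) \<times> (nat \<times> nat \<Rightarrow> bool \<times> bool)) measure" where
  "basic_coupling \<delta>1 \<delta>2 B B' =
     distr (rand_space \<delta>1 \<delta>2) (cfg_space \<Otimes>\<^sub>M cfg_space) (\<lambda>\<omega>. (s6v_out B \<omega>, s6v_out B' \<omega>))"

end

theory Submission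
  imports Defs
begin


lemma map_pair_pmf_bind: "map_pmf (\<lambda>(y, f). G f y) (pair_pmf q Q) = bind_pmf Q (\<lambda>f. map_pmf (G f) q)"
  unfolding pair_pmf_def map_pmf_def bind_assoc_pmf bind_return_pmf by (subst bind_commute_pmf) simp

lemma Pi_pmf_adaptive:
  fixes rank :: "'i \<Rightarrow> nat" and st :: "'i \<Rightarrow> ('i \<Rightarrow> 'x) \<Rightarrow> 's" and h :: "'s \<Rightarrow> 'x \<Rightarrow> 'y"
  assumes loc: "\<And>v x y. (\<And>w. rank w < rank v \<Longrightarrow> x w = y w) \<Longrightarrow> st v x = st v y"
  and hq: "\<And>s. map_pmf (h s) q = p"
  shows "finite L \<Longrightarrow> (\<forall>v\<in>L. \<forall>w. rank w < rank v \<longrightarrow> w \<in> L) \<Longrightarrow>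
    map_pmf (\<lambda>f v. if v \<in> L then h (st v f) (f v) else undefined) (Pi_pmf L undefined (\<lambda>_. q))
      = Pi_pmf L undefined (\<lambda>_. p)"
proof (induction "card L" arbitrary: L)
  case 0
  then have "L = {}" by simp
  then show ?case by simp
next
  case (Suc n)
  then have "L \<noteq> {}" by auto
  define m where "m = Max (rank ` L)"
  have "m \<in> rank ` L" unfolding m_def using Suc.prems \<open>L \<noteq> {}\<close> by (intro Max_in) auto
  then obtain v where v: "v \<in> L" "rank v = m" by auto
  have vmax: "\<And>w. w \<in> L \<Longrightarrow> rank w \<le> rank v" using v Suc.prems(1) unfolding m_def by simp
  define A where "A = L - {v}"
  have LA: "L = insert v A" "v \<notin> A" "finite A" using v Suc.prems unfolding A_def by auto
  have cA: "n = card A" using Suc.hyps LA by simp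
  have dA: "\<forall>u\<in>A. \<forall>w. rank w < rank u \<longrightarrow> w \<in> A"
  proof (intro ballI allI impI)
    fix u w assume "u \<in> A" "rank w < rank u"
    then have u: "u \<in> L" "rank u \<le> rank v" using vmax unfolding A_def by auto
    then have "w \<in> L" using Suc.prems(2) \<open>rank w < rank u\<close> by blast
    moreover have "w \<noteq> v" using u \<open>rank w < rank u\<close> by auto
    ultimately show "w \<in> A" unfolding A_def by auto
  qed
  have IH: "map_pmf (\<lambda>f v. if v \<in> A then h (st v f) (f v) else undefined) (Pi_pmf A undefined (\<lambda>_. q))
      = Pi_pmf A undefined (\<lambda>_. p)" using Suc.hyps(1)[OF cA LA(3) dA] .
  define PhiA where "PhiA = (\<lambda>f v. if v \<in> A then h (st v f) (f v) else undefined)"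
  define PhiL where "PhiL = (\<lambda>f v. if v \<in> L then h (st v f) (f v) else undefined)"
  have key: "PhiL (f(v:=y)) = (PhiA f)(v := h (st v f) y)" for f y
  proof (rule ext)
    fix u
    show "PhiL (f(v:=y)) u = ((PhiA f)(v := h (st v f) y)) u"
    proof (cases "u = v")
      case True
      have "st v (f(v:=y)) = st v f" by (rule loc) auto
      then show ?thesis using True v by (simp add: PhiA_def PhiL_def)
    next
      case False
      then show ?thesis
      proof (cases "u \<in> A")
        case True
        then have "rank u \<le> rank v" using vmax LA by auto
        then have "st u (f(v:=y)) = st u f" by (intro loc) auto
        then show ?thesis using True False LA by (simp add: PhiA_def PhiL_def)
      qed (use LA in \<open>auto simp: PhiA_def PhiL_def\<close>)
    qed
  qed
  have PL: "Pi_pmf L undefined (\<lambda>_. q) = map_pmf (\<lambda>(y,f). f(v:=y)) (pair_pmf q (Pi_pmf A undefined (\<lambda>_. q)))"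
    using Pi_pmf_insert[OF LA(3) LA(2)] LA(1) by simp
  have "map_pmf PhiL (Pi_pmf L undefined (\<lambda>_. q))
     = map_pmf (\<lambda>(y, f). (PhiA f)(v := h (st v f) y)) (pair_pmf q (Pi_pmf A undefined (\<lambda>_. q)))"
    unfolding PL pmf.map_comp
  proof (rule map_pmf_cong[OF refl])
    fix x :: "'x \<times> ('i \<Rightarrow> 'x)"
    obtain y f where x: "x = (y,f)" by (cases x)
    show "(PhiL \<circ> (\<lambda>(y,f). f(v:=y))) x = (\<lambda>(y, f). (PhiA f)(v := h (st v f) y)) x"
      unfolding x o_def case_prod_conv by (rule key)
  qed
  also have "\<dots> = bind_pmf (Pi_pmf A undefined (\<lambda>_. q)) (\<lambda>f. map_pmf (\<lambda>z. (PhiA f)(v := z)) (map_pmf (h (st v f)) q))"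
    by (simp add: map_pair_pmf_bind pmf.map_comp o_def)
  also have "\<dots> = bind_pmf (map_pmf PhiA (Pi_pmf A undefined (\<lambda>_. q))) (\<lambda>g. map_pmf (\<lambda>z. g(v := z)) p)"
    by (simp add: hq bind_map_pmf)
  also have "\<dots> = map_pmf (\<lambda>(z, g). g(v := z)) (pair_pmf p (Pi_pmf A undefined (\<lambda>_. p)))"
    unfolding PhiA_def IH by (simp add: map_pair_pmf_bind)
  also have "\<dots> = Pi_pmf L undefined (\<lambda>_. p)"
    using Pi_pmf_insert[OF LA(3) LA(2), of undefined "\<lambda>_. p"] LA(1) by simp
  finally show ?case unfolding PhiL_def .
qed

lemma finite_sets_PiM_pmf:
  fixes q :: "'x::finite pmf"
  assumes K: "finite K" and S: "S \<subseteq> space (PiM K (\<lambda>_. measure_pmf q))"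
  shows "S \<in> sets (PiM K (\<lambda>_. measure_pmf q))"
proof -
  have sp: "space (PiM K (\<lambda>_. measure_pmf q)) = PiE K (\<lambda>_. UNIV)" by (simp add: space_PiM)
  have "finite (PiE K (\<lambda>_. UNIV::'x set))" by (rule finite_PiE) (auto simp: K)
  then have fin: "finite S" using S sp by (metis finite_subset)
  have sing: "PiE K (\<lambda>i. {y i}) = {y}" if "y \<in> PiE K (\<lambda>_. UNIV)" for y
  proof (rule set_eqI)
    fix x show "x \<in> PiE K (\<lambda>i. {y i}) \<longleftrightarrow> x \<in> {y}"
      using that by (auto simp: PiE_iff extensional_def fun_eq_iff)
  qed
  have "S = (\<Union>y\<in>S. {y})" by auto
  also have "\<dots> = (\<Union>y\<in>S. PiE K (\<lambda>i. {y i}))"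
    using S unfolding sp by (intro SUP_cong refl sing[symmetric]) auto
  also have "\<dots> \<in> sets (PiM K (\<lambda>_. measure_pmf q))"
    using fin K by (intro sets.finite_UN ballI sets_PiM_I_finite) auto
  finally show ?thesis .
qed

lemma fin_dep_measurable:
  fixes q :: "'x::finite pmf" and f :: "('i \<Rightarrow> 'x) \<Rightarrow> 'b"
  assumes K: "finite K" and dep: "\<And>x y. (\<And>w. w \<in> K \<Longrightarrow> x w = y w) \<Longrightarrow> f x = f y"
  shows "f \<in> measurable (PiM UNIV (\<lambda>_. measure_pmf q)) (count_space UNIV)"
proof -
  have eq: "f x = f (restrict x K)" for x by (rule dep) auto
  have m1: "(\<lambda>x. restrict x K) \<in> measurable (PiM UNIV (\<lambda>_. measure_pmf q)) (PiM K (\<lambda>_. measure_pmf q))"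
    by (rule measurable_restrict_subset) auto
  have m2: "f \<in> measurable (PiM K (\<lambda>_. measure_pmf q)) (count_space UNIV)"
    unfolding measurable_def by (auto intro: finite_sets_PiM_pmf[OF K, where q=q])
  have "(\<lambda>x. f (restrict x K)) \<in> measurable (PiM UNIV (\<lambda>_. measure_pmf q)) (count_space UNIV)"
    using measurable_comp[OF m1 m2] by (simp add: o_def)
  then show ?thesis using eq by simp
qed

lemma PiM_Pi_pmf_emeasure:
  fixes q :: "'x pmf" and L :: "'i set"
  assumes L: "finite L" and E: "E \<in> sets (PiM L (\<lambda>_. measure_pmf q))"
  shows "emeasure (PiM L (\<lambda>_. measure_pmf q)) E = emeasure (measure_pmf (Pi_pmf L undefined (\<lambda>_. q))) E"
proof -
  interpret Pq: product_prob_space "\<lambda>_::'i. measure_pmf q" L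
    by (intro product_prob_spaceI) (simp add: measure_pmf.prob_space_axioms)
  let ?P = "measure_pmf (Pi_pmf L undefined (\<lambda>_. q))"
  let ?D = "distr ?P (PiM L (\<lambda>_. measure_pmf q)) (\<lambda>x. restrict x L)"
  have supp: "x \<in> set_pmf (Pi_pmf L undefined (\<lambda>_. q)) \<Longrightarrow> restrict x L = x" for x
    using set_Pi_pmf_subset[OF L, of undefined "\<lambda>_. q"] by (auto simp: fun_eq_iff)
  have D: "?D = PiM L (\<lambda>_. measure_pmf q)"
  proof (rule Pq.PiM_eqI[OF L])
    show "sets ?D = sets (PiM L (\<lambda>_. measure_pmf q))" by simp
  next
    fix A assume A: "\<And>i. i \<in> L \<Longrightarrow> A i \<in> sets (measure_pmf q)"
    have "emeasure ?D (PiE L A) = emeasure ?P ((\<lambda>x. restrict x L) -` PiE L A)"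
      by (subst emeasure_distr) (auto intro!: sets_PiM_I_finite L simp: space_PiM)
    also have "(\<lambda>x. restrict x L) -` PiE L A = Pi L A"
      by (auto simp: PiE_def Pi_def)
    also have "emeasure ?P (Pi L A) = ennreal (\<Prod>i\<in>L. measure_pmf.prob q (A i))"
      by (simp add: measure_pmf.emeasure_eq_measure measure_Pi_pmf_Pi L)
    also have "\<dots> = (\<Prod>i\<in>L. emeasure (measure_pmf q) (A i))"
      by (simp add: measure_pmf.emeasure_eq_measure prod_ennreal)
    finally show "emeasure ?D (PiE L A) = (\<Prod>i\<in>L. emeasure (measure_pmf q) (A i))" .
  qed
  have "emeasure (PiM L (\<lambda>_. measure_pmf q)) E = emeasure ?D E" by (simp add: D)
  also have "\<dots> = emeasure ?P ((\<lambda>x. restrict x L) -` E)"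
    using E by (subst emeasure_distr) (auto simp: space_PiM)
  also have "\<dots> = emeasure ?P ((\<lambda>x. restrict x L) -` E \<inter> set_pmf (Pi_pmf L undefined (\<lambda>_. q)))"
    by (simp add: emeasure_Int_set_pmf)
  also have "(\<lambda>x. restrict x L) -` E \<inter> set_pmf (Pi_pmf L undefined (\<lambda>_. q)) = E \<inter> set_pmf (Pi_pmf L undefined (\<lambda>_. q))"
    using supp by auto
  also have "emeasure ?P \<dots> = emeasure ?P E"
    by (simp add: emeasure_Int_set_pmf)
  finally show ?thesis .
qed

lemma adaptive_measurable:
  fixes rank :: "'i \<Rightarrow> nat" and st :: "'i \<Rightarrow> ('i \<Rightarrow> 'x::finite) \<Rightarrow> 's" and h :: "'s \<Rightarrow> 'x \<Rightarrow> 'y"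
  assumes loc: "\<And>v x y. (\<And>w. rank w < rank v \<Longrightarrow> x w = y w) \<Longrightarrow> st v x = st v y"
  and finr: "\<And>N. finite {w. rank w \<le> N}"
  shows "(\<lambda>x v. h (st v x) (x v)) \<in> measurable (PiM UNIV (\<lambda>_. measure_pmf q)) (PiM UNIV (\<lambda>_. measure_pmf p))"
proof (rule measurable_PiM_single')
  fix v :: 'i
  show "(\<lambda>x. h (st v x) (x v)) \<in> measurable (PiM UNIV (\<lambda>_. measure_pmf q)) (measure_pmf p)"
    unfolding measurable_pmf_measure2
  proof (rule fin_dep_measurable[OF finr[of "rank v"]])
    fix x y :: "'i \<Rightarrow> 'x" assume "\<And>w. w \<in> {w. rank w \<le> rank v} \<Longrightarrow> x w = y w"
    then have "st v x = st v y" "x v = y v" by (auto intro!: loc)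
    then show "h (st v x) (x v) = h (st v y) (y v)" by simp
  qed
qed (simp add: space_PiM)

lemma PiM_adaptive:
  fixes rank :: "'i \<Rightarrow> nat" and st :: "'i \<Rightarrow> ('i \<Rightarrow> 'x::finite) \<Rightarrow> 's" and h :: "'s \<Rightarrow> 'x \<Rightarrow> 'y"
  assumes loc: "\<And>v x y. (\<And>w. rank w < rank v \<Longrightarrow> x w = y w) \<Longrightarrow> st v x = st v y"
  and hq: "\<And>s. map_pmf (h s) q = p"
  and finr: "\<And>N. finite {w. rank w \<le> N}"
  shows "distr (PiM UNIV (\<lambda>_. measure_pmf q)) (PiM UNIV (\<lambda>_. measure_pmf p)) (\<lambda>x v. h (st v x) (x v))
     = PiM UNIV (\<lambda>_. measure_pmf p)"
proof -
  interpret Pp: product_prob_space "\<lambda>_::'i. measure_pmf p" UNIV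
    by (intro product_prob_spaceI) (simp add: measure_pmf.prob_space_axioms)
  interpret Pq: product_prob_space "\<lambda>_::'i. measure_pmf q" UNIV
    by (intro product_prob_spaceI) (simp add: measure_pmf.prob_space_axioms)
  let ?PQ = "PiM UNIV (\<lambda>_::'i. measure_pmf q)"
  let ?C = "\<lambda>x v. h (st v x) (x v)"
  have Cm: "?C \<in> measurable ?PQ (PiM UNIV (\<lambda>_. measure_pmf p))"
    by (rule adaptive_measurable[OF loc finr])
  show ?thesis
  proof (rule Pp.PiM_eq)
    show "sets (distr ?PQ (PiM UNIV (\<lambda>_. measure_pmf p)) ?C) = sets (PiM UNIV (\<lambda>_. measure_pmf p))"
      by simp
  next
    fix J :: "'i set" and F assume J: "finite J" "J \<subseteq> UNIV"
      and F: "\<And>j. j \<in> J \<Longrightarrow> F j \<in> sets (measure_pmf p)"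
    define N where "N = Max (insert 0 (rank ` J))"
    define L where "L = {w. rank w \<le> N}"
    have finL: "finite L" unfolding L_def by (rule finr)
    have JL: "J \<subseteq> L" unfolding L_def N_def using J by (auto intro: Max_ge)
    have dL: "\<forall>v\<in>L. \<forall>w. rank w < rank v \<longrightarrow> w \<in> L" unfolding L_def by auto
    define PhiL where "PhiL = (\<lambda>f v. if v \<in> L then h (st v f) (f v) else undefined)"
    define E where "E = {y \<in> space (PiM L (\<lambda>_. measure_pmf q)). \<forall>j\<in>J. PhiL y j \<in> F j}"
    have Esets: "E \<in> sets (PiM L (\<lambda>_. measure_pmf q))"
      by (rule finite_sets_PiM_pmf[OF finL]) (auto simp: E_def)
    have stL: "st j (restrict x L) = st j x" if "j \<in> L" for j x
      by (rule loc) (use that dL in auto)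
    have pre: "?C -` prod_emb UNIV (\<lambda>_. measure_pmf p) J (PiE J F) \<inter> space ?PQ
       = (\<lambda>x. restrict x L) -` E \<inter> space ?PQ"
      using JL by (auto simp: prod_emb_iff E_def PhiL_def stL space_PiM PiE_iff) (metis subsetD)
    define B where "B = (\<lambda>j. if j \<in> J then F j else UNIV)"
    have suppE: "E \<inter> set_pmf (Pi_pmf L undefined (\<lambda>_. q)) = PhiL -` Pi L B \<inter> set_pmf (Pi_pmf L undefined (\<lambda>_. q))"
      using set_Pi_pmf_subset[OF finL, of undefined "\<lambda>_. q"] JL
      by (auto simp: E_def B_def space_PiM PiE_iff extensional_def Pi_def)
    have "emeasure (distr ?PQ (PiM UNIV (\<lambda>_. measure_pmf p)) ?C) (prod_emb UNIV (\<lambda>_. measure_pmf p) J (PiE J F))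
       = emeasure ?PQ (?C -` prod_emb UNIV (\<lambda>_. measure_pmf p) J (PiE J F) \<inter> space ?PQ)"
      using J F by (intro emeasure_distr Cm sets_PiM_I) auto
    also have "\<dots> = emeasure ?PQ ((\<lambda>x. restrict x L) -` E \<inter> space ?PQ)" by (simp only: pre)
    also have "\<dots> = emeasure (distr ?PQ (PiM L (\<lambda>_. measure_pmf q)) (\<lambda>x. restrict x L)) E"
      using Esets by (intro emeasure_distr[symmetric] measurable_restrict_subset) auto
    also have "\<dots> = emeasure (PiM L (\<lambda>_. measure_pmf q)) E"
      using finL by (simp add: Pq.distr_PiM_restrict_finite)
    also have "\<dots> = emeasure (measure_pmf (Pi_pmf L undefined (\<lambda>_. q))) E"
      by (rule PiM_Pi_pmf_emeasure[OF finL Esets])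
    also have "\<dots> = emeasure (measure_pmf (Pi_pmf L undefined (\<lambda>_. q))) (PhiL -` Pi L B)"
      by (subst (1 2) emeasure_Int_set_pmf[symmetric]) (simp only: suppE)
    also have "\<dots> = emeasure (measure_pmf (map_pmf PhiL (Pi_pmf L undefined (\<lambda>_. q)))) (Pi L B)"
      by simp
    also have "map_pmf PhiL (Pi_pmf L undefined (\<lambda>_. q)) = Pi_pmf L undefined (\<lambda>_. p)"
      unfolding PhiL_def by (rule Pi_pmf_adaptive[OF loc hq finL dL])
    also have "emeasure (measure_pmf (Pi_pmf L undefined (\<lambda>_. p))) (Pi L B)
       = ennreal (\<Prod>j\<in>L. measure_pmf.prob p (B j))"
      by (simp add: measure_pmf.emeasure_eq_measure measure_Pi_pmf_Pi finL)
    also have "(\<Prod>j\<in>L. measure_pmf.prob p (B j)) = (\<Prod>j\<in>J. measure_pmf.prob p (F j))"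
      by (rule prod.mono_neutral_cong_right[OF finL JL]) (auto simp: B_def)
    also have "ennreal \<dots> = (\<Prod>j\<in>J. emeasure (measure_pmf p) (F j))"
      by (simp add: measure_pmf.emeasure_eq_measure prod_ennreal)
    finally show "emeasure (distr ?PQ (PiM UNIV (\<lambda>_. measure_pmf p)) ?C) (prod_emb UNIV (\<lambda>_. measure_pmf p) J (PiE J F))
       = (\<Prod>j\<in>J. emeasure (measure_pmf p) (F j))" .
  qed
qed



lemma bern_or:
  assumes "0 \<le> a" "a \<le> 1" "0 \<le> t" "t \<le> 1"
  shows "bind_pmf (bernoulli_pmf a) (\<lambda>b. bind_pmf (bernoulli_pmf t) (\<lambda>e. return_pmf (b \<or> e)))
     = bernoulli_pmf (a + (1 - a) * t)"
proof -
  have "(1 - a) * t \<le> 1 - a" using assms by (simp add: mult_left_le)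
  then have c: "0 \<le> a + (1 - a) * t" "a + (1 - a) * t \<le> 1" using assms by auto
  show ?thesis
  proof (rule pmf_eqI)
    fix z :: bool show "pmf (bind_pmf (bernoulli_pmf a) (\<lambda>b. bind_pmf (bernoulli_pmf t) (\<lambda>e. return_pmf (b \<or> e)))) z = pmf (bernoulli_pmf (a + (1 - a) * t)) z"
      using assms c by (cases z) (simp_all add: pmf_bind pmf_return algebra_simps measure_pmf_single)
  qed
qed

lemma bern_and:
  assumes "0 \<le> a" "a \<le> 1" "0 \<le> t" "t \<le> 1"
  shows "bind_pmf (bernoulli_pmf a) (\<lambda>b. bind_pmf (bernoulli_pmf t) (\<lambda>e. return_pmf (b \<and> e)))
     = bernoulli_pmf (a * t)"
proof -
  have c: "0 \<le> a * t" "a * t \<le> 1" using assms by (auto simp: mult_le_one)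
  show ?thesis
  proof (rule pmf_eqI)
    fix z :: bool show "pmf (bind_pmf (bernoulli_pmf a) (\<lambda>b. bind_pmf (bernoulli_pmf t) (\<lambda>e. return_pmf (b \<and> e)))) z = pmf (bernoulli_pmf (a * t)) z"
      using assms c by (cases z) (simp_all add: pmf_bind pmf_return algebra_simps measure_pmf_single)
  qed
qed

lemma bern_nand:
  assumes "0 \<le> a" "a \<le> 1" "0 \<le> t" "t \<le> 1"
  shows "bind_pmf (bernoulli_pmf a) (\<lambda>b. bind_pmf (bernoulli_pmf t) (\<lambda>e. return_pmf (\<not> b \<and> e)))
     = bernoulli_pmf ((1 - a) * t)"
proof -
  have c: "0 \<le> (1 - a) * t" "(1 - a) * t \<le> 1" using assms by (auto simp: mult_le_one)
  show ?thesis
  proof (rule pmf_eqI)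
    fix z :: bool show "pmf (bind_pmf (bernoulli_pmf a) (\<lambda>b. bind_pmf (bernoulli_pmf t) (\<lambda>e. return_pmf (\<not> b \<and> e)))) z = pmf (bernoulli_pmf ((1 - a) * t)) z"
      using assms c by (cases z) (simp_all add: pmf_bind pmf_return algebra_simps measure_pmf_single)
  qed
qed

definition qd :: "real \<Rightarrow> real \<Rightarrow> ((bool \<times> bool) \<times> bool \<times> bool \<times> bool \<times> bool \<times> bool) pmf" where
  "qd d1 d2 = pair_pmf (pair_pmf (bernoulli_pmf d1) (bernoulli_pmf d2))
     (pair_pmf (bernoulli_pmf ((d1 - d2) / (1 - d2))) (pair_pmf (bernoulli_pmf d2)
       (pair_pmf (bernoulli_pmf (d2 / (1 - d2))) (pair_pmf (bernoulli_pmf d1) (bernoulli_pmf (d2 / d1))))))"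

lemma qA:
  assumes "0 \<le> d2" "d2 < d1" "d1 < 1" "d2 \<le> 1/2"
  shows "map_pmf (\<lambda>((b1, b2), e, c, f, d, f'). (b2 \<or> e, c)) (qd d1 d2)
     = pair_pmf (bernoulli_pmf d1) (bernoulli_pmf d2)"
proof -
  have t: "0 \<le> (d1 - d2) / (1 - d2)" "(d1 - d2) / (1 - d2) \<le> 1" using assms by auto
  have "d2 + (1 - d2) * ((d1 - d2) / (1 - d2)) = d1" using assms by simp
  then have eq1: "bernoulli_pmf d1 = bind_pmf (bernoulli_pmf d2) (\<lambda>b. bind_pmf (bernoulli_pmf ((d1 - d2) / (1 - d2))) (\<lambda>e. return_pmf (b \<or> e)))"
    using bern_or[of d2 "(d1 - d2) / (1 - d2)"] assms t by simp
  have "map_pmf (\<lambda>((b1, b2), e, c, f, d, f'). (b2 \<or> e, c)) (qd d1 d2)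
      = do {b2 \<leftarrow> bernoulli_pmf d2; e \<leftarrow> bernoulli_pmf ((d1 - d2) / (1 - d2)); c \<leftarrow> bernoulli_pmf d2; return_pmf (b2 \<or> e, c)}"
    by (simp add: qd_def pair_pmf_def map_pmf_def bind_assoc_pmf bind_return_pmf)
  also have "\<dots> = do {x \<leftarrow> bind_pmf (bernoulli_pmf d2) (\<lambda>b. bind_pmf (bernoulli_pmf ((d1 - d2) / (1 - d2))) (\<lambda>e. return_pmf (b \<or> e))); y \<leftarrow> bernoulli_pmf d2; return_pmf (x, y)}"
    by (simp add: bind_assoc_pmf bind_return_pmf)
  also have "\<dots> = pair_pmf (bernoulli_pmf d1) (bernoulli_pmf d2)"
    by (simp only: eq1[symmetric]) (simp add: pair_pmf_def)
  finally show ?thesis .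
qed

lemma qB:
  assumes "0 \<le> d2" "d2 < d1" "d1 < 1" "d2 \<le> 1/2"
  shows "map_pmf (\<lambda>((b1, b2), e, c, f, d, f'). (b1, \<not> b2 \<and> f)) (qd d1 d2)
     = pair_pmf (bernoulli_pmf d1) (bernoulli_pmf d2)"
proof -
  have t: "0 \<le> d2 / (1 - d2)" "d2 / (1 - d2) \<le> 1" using assms by auto
  have "(1 - d2) * (d2 / (1 - d2)) = d2" using assms by simp
  then have eq1: "bernoulli_pmf d2 = bind_pmf (bernoulli_pmf d2) (\<lambda>b. bind_pmf (bernoulli_pmf (d2 / (1 - d2))) (\<lambda>e. return_pmf (\<not> b \<and> e)))"
    using bern_nand[of d2 "d2 / (1 - d2)"] assms t by simp
  have "map_pmf (\<lambda>((b1, b2), e, c, f, d, f'). (b1, \<not> b2 \<and> f)) (qd d1 d2)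
      = do {b1 \<leftarrow> bernoulli_pmf d1; b2 \<leftarrow> bernoulli_pmf d2; f \<leftarrow> bernoulli_pmf (d2 / (1 - d2)); return_pmf (b1, \<not> b2 \<and> f)}"
    by (simp add: qd_def pair_pmf_def map_pmf_def bind_assoc_pmf bind_return_pmf)
  also have "\<dots> = do {x \<leftarrow> bernoulli_pmf d1; y \<leftarrow> bind_pmf (bernoulli_pmf d2) (\<lambda>b. bind_pmf (bernoulli_pmf (d2 / (1 - d2))) (\<lambda>e. return_pmf (\<not> b \<and> e))); return_pmf (x, y)}"
    by (simp add: bind_assoc_pmf bind_return_pmf)
  also have "\<dots> = pair_pmf (bernoulli_pmf d1) (bernoulli_pmf d2)"
    by (simp only: eq1[symmetric]) (simp add: pair_pmf_def)
  finally show ?thesis .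
qed

lemma qC:
  assumes "0 \<le> d2" "d2 < d1" "d1 < 1" "d2 \<le> 1/2"
  shows "map_pmf (\<lambda>((b1, b2), e, c, f, d, f'). (d, b1 \<and> f')) (qd d1 d2)
     = pair_pmf (bernoulli_pmf d1) (bernoulli_pmf d2)"
proof -
  have t: "0 \<le> d2 / d1" "d2 / d1 \<le> 1" using assms by auto
  have "d1 * (d2 / d1) = d2" using assms by simp
  then have eq1: "bernoulli_pmf d2 = bind_pmf (bernoulli_pmf d1) (\<lambda>b. bind_pmf (bernoulli_pmf (d2 / d1)) (\<lambda>e. return_pmf (b \<and> e)))"
    using bern_and[of d1 "d2 / d1"] assms t by simp
  have "map_pmf (\<lambda>((b1, b2), e, c, f, d, f'). (d, b1 \<and> f')) (qd d1 d2)
      = do {b1 \<leftarrow> bernoulli_pmf d1; d \<leftarrow> bernoulli_pmf d1; f \<leftarrow> bernoulli_pmf (d2 / d1); return_pmf (d, b1 \<and> f)}"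
    by (simp add: qd_def pair_pmf_def map_pmf_def bind_assoc_pmf bind_return_pmf)
  also have "\<dots> = do {d \<leftarrow> bernoulli_pmf d1; b1 \<leftarrow> bernoulli_pmf d1; f \<leftarrow> bernoulli_pmf (d2 / d1); return_pmf (d, b1 \<and> f)}"
    by (rule bind_commute_pmf)
  also have "\<dots> = do {x \<leftarrow> bernoulli_pmf d1; y \<leftarrow> bind_pmf (bernoulli_pmf d1) (\<lambda>b. bind_pmf (bernoulli_pmf (d2 / d1)) (\<lambda>e. return_pmf (b \<and> e))); return_pmf (x, y)}"
    by (simp add: bind_assoc_pmf bind_return_pmf)
  also have "\<dots> = pair_pmf (bernoulli_pmf d1) (bernoulli_pmf d2)"
    by (simp only: eq1[symmetric]) (simp add: pair_pmf_def)
  finally show ?thesis .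
qed

lemma q0: "map_pmf fst (qd d1 d2) = pair_pmf (bernoulli_pmf d1) (bernoulli_pmf d2)"
  by (simp add: qd_def map_fst_pair_pmf)



declare s6v_out.simps[simp del]

type_synonym rx = "(bool \<times> bool) \<times> bool \<times> bool \<times> bool \<times> bool \<times> bool"

definition hA :: "rx \<Rightarrow> bool \<times> bool" where "hA = (\<lambda>((b1, b2), e, c, f, d, f'). (b2 \<or> e, c))"
definition hB :: "rx \<Rightarrow> bool \<times> bool" where "hB = (\<lambda>((b1, b2), e, c, f, d, f'). (b1, \<not> b2 \<and> f))"
definition hC :: "rx \<Rightarrow> bool \<times> bool" where "hC = (\<lambda>((b1, b2), e, c, f, d, f'). (d, b1 \<and> f'))"
definition hh :: "nat \<Rightarrow> rx \<Rightarrow> bool \<times> bool" where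
  "hh s = (if s = 1 then hA else if s = 2 then hB else if s = 3 then hC else fst)"

lemma hh_pmf:
  assumes "0 \<le> d2" "d2 < d1" "d1 < 1" "d2 \<le> 1/2"
  shows "map_pmf (hh s) (qd d1 d2) = pair_pmf (bernoulli_pmf d1) (bernoulli_pmf d2)"
  using qA[OF assms] qB[OF assms] qC[OF assms] q0[of d1 d2]
  by (simp add: hh_def hA_def hB_def hC_def)

definition inL :: "(nat \<times> nat) set \<Rightarrow> (nat \<times> nat \<Rightarrow> bool \<times> bool) \<Rightarrow> nat \<times> nat \<Rightarrow> bool" where
  "inL B c v = (if fst v = 1 then (0, snd v) \<in> B else fst (c (fst v - 1, snd v)))"
definition inD :: "(nat \<times> nat) set \<Rightarrow> (nat \<times> nat \<Rightarrow> bool \<times> bool) \<Rightarrow> nat \<times> nat \<Rightarrow> bool" where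
  "inD B c v = (if snd v = 1 then (fst v, 0) \<in> B else snd (c (fst v, snd v - 1)))"

definition cls :: "bool \<Rightarrow> bool \<Rightarrow> bool \<Rightarrow> bool \<Rightarrow> bool \<Rightarrow> bool \<Rightarrow> bool \<Rightarrow> bool \<Rightarrow> nat" where
  "cls lX dX lX' dX' lE dE lE' dE' =
     (if dX' \<and> \<not> dX \<and> dE' \<and> \<not> dE \<and> lX \<and> \<not> lE then 1
      else if dX' \<and> \<not> dX \<and> lE' \<and> \<not> lE then 2
      else if lX' \<and> \<not> lX \<and> lE' \<and> \<not> lE \<and> dX \<and> \<not> dE then 3 else 0)"

function etaOut :: "(nat \<times> nat) set \<Rightarrow> (nat \<times> nat) set \<Rightarrow> (nat \<times> nat) set \<Rightarrow> (nat \<times> nat) set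
    \<Rightarrow> (nat \<times> nat \<Rightarrow> rx) \<Rightarrow> nat \<times> nat \<Rightarrow> (bool \<times> bool) \<times> (bool \<times> bool)" where
  "etaOut BX BX' BE BE' x (i, j) = (if i = 0 \<or> j = 0 then ((False, False), (False, False)) else
     (let lE = (if i = 1 then (0, j) \<in> BE else fst (fst (etaOut BX BX' BE BE' x (i - 1, j))));
          dE = (if j = 1 then (i, 0) \<in> BE else snd (fst (etaOut BX BX' BE BE' x (i, j - 1))));
          lE' = (if i = 1 then (0, j) \<in> BE' else fst (snd (etaOut BX BX' BE BE' x (i - 1, j))));
          dE' = (if j = 1 then (i, 0) \<in> BE' else snd (snd (etaOut BX BX' BE BE' x (i, j - 1))));
          w = hh (cls (inL BX (s6v_out BX (\<lambda>v. fst (x v))) (i, j)) (inD BX (s6v_out BX (\<lambda>v. fst (x v))) (i, j))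
                      (inL BX' (s6v_out BX' (\<lambda>v. fst (x v))) (i, j)) (inD BX' (s6v_out BX' (\<lambda>v. fst (x v))) (i, j))
                      lE dE lE' dE') (x (i, j))
      in (s6v_rule w lE dE, s6v_rule w lE' dE')))"
  by pat_completeness auto
termination
  by (relation "Wellfounded.measure (\<lambda>(_, _, _, _, _, (i, j)). i + j)") auto

declare etaOut.simps[simp del]

definition stE :: "(nat \<times> nat) set \<Rightarrow> (nat \<times> nat) set \<Rightarrow> (nat \<times> nat) set \<Rightarrow> (nat \<times> nat) set
    \<Rightarrow> nat \<times> nat \<Rightarrow> (nat \<times> nat \<Rightarrow> rx) \<Rightarrow> nat" where
  "stE BX BX' BE BE' v x = cls (inL BX (s6v_out BX (\<lambda>v. fst (x v))) v) (inD BX (s6v_out BX (\<lambda>v. fst (x v))) v)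
     (inL BX' (s6v_out BX' (\<lambda>v. fst (x v))) v) (inD BX' (s6v_out BX' (\<lambda>v. fst (x v))) v)
     (inL BE (\<lambda>w. fst (etaOut BX BX' BE BE' x w)) v) (inD BE (\<lambda>w. fst (etaOut BX BX' BE BE' x w)) v)
     (inL BE' (\<lambda>w. snd (etaOut BX BX' BE BE' x w)) v) (inD BE' (\<lambda>w. snd (etaOut BX BX' BE BE' x w)) v)"

lemma s6v_out_eq:
  "1 \<le> i \<Longrightarrow> 1 \<le> j \<Longrightarrow> s6v_out B \<omega> (i, j) = s6v_rule (\<omega> (i, j)) (inL B (s6v_out B \<omega>) (i, j)) (inD B (s6v_out B \<omega>) (i, j))"
  by (subst s6v_out.simps) (simp add: inL_def inD_def)

lemma s6v_out_0: "i = 0 \<or> j = 0 \<Longrightarrow> s6v_out B \<omega> (i, j) = (False, False)"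
  by (subst s6v_out.simps) simp

lemma etaOut_eq:
  "1 \<le> i \<Longrightarrow> 1 \<le> j \<Longrightarrow> etaOut BX BX' BE BE' x (i, j) =
    (s6v_rule (hh (stE BX BX' BE BE' (i, j) x) (x (i, j))) (inL BE (\<lambda>w. fst (etaOut BX BX' BE BE' x w)) (i, j)) (inD BE (\<lambda>w. fst (etaOut BX BX' BE BE' x w)) (i, j)),
     s6v_rule (hh (stE BX BX' BE BE' (i, j) x) (x (i, j))) (inL BE' (\<lambda>w. snd (etaOut BX BX' BE BE' x w)) (i, j)) (inD BE' (\<lambda>w. snd (etaOut BX BX' BE BE' x w)) (i, j)))"
  by (subst etaOut.simps) (simp add: inL_def inD_def stE_def Let_def)

lemma etaOut_0: "i = 0 \<or> j = 0 \<Longrightarrow> etaOut BX BX' BE BE' x (i, j) = ((False, False), (False, False))"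
  by (subst etaOut.simps) simp

lemma loc_out:
  "(\<And>w. fst w + snd w \<le> fst v + snd v \<Longrightarrow> \<omega> w = \<omega>' w) \<Longrightarrow> s6v_out B \<omega> v = s6v_out B \<omega>' v"
proof (induction "fst v + snd v" arbitrary: v rule: less_induct)
  case less
  obtain i j where v: "v = (i, j)" by (cases v)
  show ?case
  proof (cases "i = 0 \<or> j = 0")
    case True then show ?thesis by (simp add: v s6v_out_0)
  next
    case False
    then have ij: "1 \<le> i" "1 \<le> j" by auto
    have a: "s6v_out B \<omega> (i - 1, j) = s6v_out B \<omega>' (i - 1, j)" if "i \<noteq> 1"
      using that ij by (intro less.hyps) (auto simp: v intro!: less.prems)
    have b: "s6v_out B \<omega> (i, j - 1) = s6v_out B \<omega>' (i, j - 1)" if "j \<noteq> 1"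
      using that ij by (intro less.hyps) (auto simp: v intro!: less.prems)
    have c: "\<omega> (i, j) = \<omega>' (i, j)" by (rule less.prems) (simp add: v)
    show ?thesis unfolding v using a b c by (simp only: s6v_out_eq[OF ij]) (cases "i = 1"; cases "j = 1"; simp add: inL_def inD_def)
  qed
qed


lemma loc_inL_out:
  assumes "\<And>w. fst w + snd w < fst v + snd v \<Longrightarrow> \<omega> w = \<omega>' w"
  shows "inL B (s6v_out B \<omega>) v = inL B (s6v_out B \<omega>') v" "inD B (s6v_out B \<omega>) v = inD B (s6v_out B \<omega>') v"
proof -
  obtain i j where v: "v = (i, j)" by (cases v)
  have "s6v_out B \<omega> (i - 1, j) = s6v_out B \<omega>' (i - 1, j)"
  proof (cases "i = 0")
    case True then show ?thesis by (simp add: s6v_out_0)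
  next
    case False then show ?thesis by (intro loc_out assms) (auto simp: v)
  qed
  then show "inL B (s6v_out B \<omega>) v = inL B (s6v_out B \<omega>') v" by (simp add: inL_def v)
  have "s6v_out B \<omega> (i, j - 1) = s6v_out B \<omega>' (i, j - 1)"
  proof (cases "j = 0")
    case True then show ?thesis by (simp add: s6v_out_0)
  next
    case False then show ?thesis by (intro loc_out assms) (auto simp: v)
  qed
  then show "inD B (s6v_out B \<omega>) v = inD B (s6v_out B \<omega>') v" by (simp add: inD_def v)
qed

lemma loc_eta:
  "(\<And>w. fst w + snd w \<le> fst v + snd v \<Longrightarrow> x w = y w) \<Longrightarrow> etaOut BX BX' BE BE' x v = etaOut BX BX' BE BE' y v"
proof (induction "fst v + snd v" arbitrary: v rule: less_induct)
  case less
  obtain i j where v: "v = (i, j)" by (cases v)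
  show ?case
  proof (cases "i = 0 \<or> j = 0")
    case True then show ?thesis by (simp add: v etaOut_0)
  next
    case False
    then have ij: "1 \<le> i" "1 \<le> j" by auto
    have a: "etaOut BX BX' BE BE' x (i - 1, j) = etaOut BX BX' BE BE' y (i - 1, j)" if "i \<noteq> 1"
      using that ij by (intro less.hyps) (auto simp: v intro!: less.prems)
    have b: "etaOut BX BX' BE BE' x (i, j - 1) = etaOut BX BX' BE BE' y (i, j - 1)" if "j \<noteq> 1"
      using that ij by (intro less.hyps) (auto simp: v intro!: less.prems)
    have c: "x (i, j) = y (i, j)" by (rule less.prems) (simp add: v)
    have lo: "\<And>w. fst w + snd w < fst (i, j) + snd (i, j) \<Longrightarrow> fst (x w) = fst (y w)"
      using less.prems by (auto simp: v)
    have d: "inL B (s6v_out B (\<lambda>v. fst (x v))) (i, j) = inL B (s6v_out B (\<lambda>v. fst (y v))) (i, j)"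
            "inD B (s6v_out B (\<lambda>v. fst (x v))) (i, j) = inD B (s6v_out B (\<lambda>v. fst (y v))) (i, j)" for B
      using loc_inL_out[of "(i, j)" "\<lambda>v. fst (x v)" "\<lambda>v. fst (y v)", OF lo] by auto
    have e: "inL B (\<lambda>w. fst (etaOut BX BX' BE BE' x w)) (i, j) = inL B (\<lambda>w. fst (etaOut BX BX' BE BE' y w)) (i, j)"
            "inD B (\<lambda>w. fst (etaOut BX BX' BE BE' x w)) (i, j) = inD B (\<lambda>w. fst (etaOut BX BX' BE BE' y w)) (i, j)"
            "inL B (\<lambda>w. snd (etaOut BX BX' BE BE' x w)) (i, j) = inL B (\<lambda>w. snd (etaOut BX BX' BE BE' y w)) (i, j)"
            "inD B (\<lambda>w. snd (etaOut BX BX' BE BE' x w)) (i, j) = inD B (\<lambda>w. snd (etaOut BX BX' BE BE' y w)) (i, j)" for B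
      using a b by (auto simp: inL_def inD_def)
    have st: "stE BX BX' BE BE' (i, j) x = stE BX BX' BE BE' (i, j) y"
      unfolding stE_def d e ..
    show ?thesis unfolding v by (simp only: etaOut_eq[OF ij] st c e)
  qed
qed

lemma loc_st:
  assumes "\<And>w. fst w + snd w < fst v + snd v \<Longrightarrow> x w = y w"
  shows "stE BX BX' BE BE' v x = stE BX BX' BE BE' v y"
proof -
  obtain i j where v: "v = (i, j)" by (cases v)
  have lo: "\<And>w. fst w + snd w < fst v + snd v \<Longrightarrow> fst (x w) = fst (y w)"
    using assms by auto
  have d: "inL B (s6v_out B (\<lambda>v. fst (x v))) v = inL B (s6v_out B (\<lambda>v. fst (y v))) v"
          "inD B (s6v_out B (\<lambda>v. fst (x v))) v = inD B (s6v_out B (\<lambda>v. fst (y v))) v" for B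
    using loc_inL_out[of v "\<lambda>v. fst (x v)" "\<lambda>v. fst (y v)", OF lo] by auto
  have a: "etaOut BX BX' BE BE' x (i - 1, j) = etaOut BX BX' BE BE' y (i - 1, j)"
  proof (cases "i = 0")
    case True then show ?thesis by (simp add: etaOut_0)
  next
    case False then show ?thesis by (intro loc_eta assms) (auto simp: v)
  qed
  have b: "etaOut BX BX' BE BE' x (i, j - 1) = etaOut BX BX' BE BE' y (i, j - 1)"
  proof (cases "j = 0")
    case True then show ?thesis by (simp add: etaOut_0)
  next
    case False then show ?thesis by (intro loc_eta assms) (auto simp: v)
  qed
  have e: "inL B (\<lambda>w. fst (etaOut BX BX' BE BE' x w)) v = inL B (\<lambda>w. fst (etaOut BX BX' BE BE' y w)) v"
          "inD B (\<lambda>w. fst (etaOut BX BX' BE BE' x w)) v = inD B (\<lambda>w. fst (etaOut BX BX' BE BE' y w)) v"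
          "inL B (\<lambda>w. snd (etaOut BX BX' BE BE' x w)) v = inL B (\<lambda>w. snd (etaOut BX BX' BE BE' y w)) v"
          "inD B (\<lambda>w. snd (etaOut BX BX' BE BE' x w)) v = inD B (\<lambda>w. snd (etaOut BX BX' BE BE' y w)) v" for B
    using a b by (auto simp: inL_def inD_def v)
  show ?thesis unfolding stE_def d e ..
qed

lemma eta_is_out:
  "s6v_out BE (\<lambda>v. hh (stE BX BX' BE BE' v x) (x v)) v = fst (etaOut BX BX' BE BE' x v) \<and>
   s6v_out BE' (\<lambda>v. hh (stE BX BX' BE BE' v x) (x v)) v = snd (etaOut BX BX' BE BE' x v)"
proof (induction "fst v + snd v" arbitrary: v rule: less_induct)
  case less
  obtain i j where v: "v = (i, j)" by (cases v)
  show ?case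
  proof (cases "i = 0 \<or> j = 0")
    case True then show ?thesis by (simp add: v etaOut_0 s6v_out_0)
  next
    case False
    then have ij: "1 \<le> i" "1 \<le> j" by auto
    let ?w = "\<lambda>v. hh (stE BX BX' BE BE' v x) (x v)"
    have a: "s6v_out BE ?w (i - 1, j) = fst (etaOut BX BX' BE BE' x (i - 1, j)) \<and>
             s6v_out BE' ?w (i - 1, j) = snd (etaOut BX BX' BE BE' x (i - 1, j))" if "i \<noteq> 1"
      using that ij by (intro less.hyps) (auto simp: v)
    have b: "s6v_out BE ?w (i, j - 1) = fst (etaOut BX BX' BE BE' x (i, j - 1)) \<and>
             s6v_out BE' ?w (i, j - 1) = snd (etaOut BX BX' BE BE' x (i, j - 1))" if "j \<noteq> 1"
      using that ij by (intro less.hyps) (auto simp: v)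
    have e: "inL BE (s6v_out BE ?w) (i, j) = inL BE (\<lambda>w. fst (etaOut BX BX' BE BE' x w)) (i, j)"
            "inD BE (s6v_out BE ?w) (i, j) = inD BE (\<lambda>w. fst (etaOut BX BX' BE BE' x w)) (i, j)"
            "inL BE' (s6v_out BE' ?w) (i, j) = inL BE' (\<lambda>w. snd (etaOut BX BX' BE BE' x w)) (i, j)"
            "inD BE' (s6v_out BE' ?w) (i, j) = inD BE' (\<lambda>w. snd (etaOut BX BX' BE BE' x w)) (i, j)"
      using a b by (auto simp: inL_def inD_def)
    show ?thesis unfolding v by (simp only: etaOut_eq[OF ij] s6v_out_eq[OF ij] e fst_conv snd_conv)
  qed
qed



definition le2 :: "bool \<times> bool \<Rightarrow> bool \<times> bool \<Rightarrow> bool" where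
  "le2 a b \<longleftrightarrow> (fst a \<longrightarrow> fst b) \<and> (snd a \<longrightarrow> snd b)"

lemma rule_mono:
  "(l \<longrightarrow> l') \<Longrightarrow> (d \<longrightarrow> d') \<Longrightarrow> le2 (s6v_rule w l d) (s6v_rule w l' d')"
  by (cases w) (auto simp: le2_def)

lemma rule_disc:
  assumes "l \<longrightarrow> l'" "d \<longrightarrow> d'"
  shows "((fst (s6v_rule w l' d') \<and> \<not> fst (s6v_rule w l d)) \<or> (snd (s6v_rule w l' d') \<and> \<not> snd (s6v_rule w l d)))
           \<longleftrightarrow> ((l' \<and> \<not> l) \<or> (d' \<and> \<not> d))"
    and "((l' \<and> \<not> l) \<noteq> (d' \<and> \<not> d)) \<Longrightarrow>
           \<not> ((fst (s6v_rule w l' d') \<and> \<not> fst (s6v_rule w l d)) \<and> (snd (s6v_rule w l' d') \<and> \<not> snd (s6v_rule w l d)))"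
  using assms by (cases w; auto)+

lemma rule_order:
  assumes "lE \<longrightarrow> lX" "dE \<longrightarrow> dX" "lE' \<longrightarrow> lX'" "dE' \<longrightarrow> dX'" "lX \<longrightarrow> lX'" "dX \<longrightarrow> dX'" "lE \<longrightarrow> lE'" "dE \<longrightarrow> dE'"
  shows "le2 (s6v_rule (hh (cls lX dX lX' dX' lE dE lE' dE') r) lE dE) (s6v_rule (fst r) lX dX) \<and>
         le2 (s6v_rule (hh (cls lX dX lX' dX' lE dE lE' dE') r) lE' dE') (s6v_rule (fst r) lX' dX')"
proof -
  obtain b1 b2 e c f d f' where r: "r = ((b1, b2), e, c, f, d, f')" by (cases r) auto
  show ?thesis using assms unfolding r
    by (cases lX; cases dX; cases lX'; cases dX'; cases lE; cases dE; cases lE'; cases dE')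
       (simp_all add: le2_def hh_def hA_def hB_def hC_def cls_def)
qed

lemma rule_Q:
  assumes "lE \<longrightarrow> lX" "dE \<longrightarrow> dX" "lE' \<longrightarrow> lX'" "dE' \<longrightarrow> dX'" "lX \<longrightarrow> lX'" "dX \<longrightarrow> dX'" "lE \<longrightarrow> lE'" "dE \<longrightarrow> dE'"
    and "(lX' \<and> \<not> lX) \<noteq> (dX' \<and> \<not> dX)" "(lE' \<and> \<not> lE) \<noteq> (dE' \<and> \<not> dE)"
    and "\<not> ((lX' \<and> \<not> lX) \<and> (dE' \<and> \<not> dE))"
  shows "\<not> ((snd (s6v_rule (fst r) lX' dX') \<and> \<not> snd (s6v_rule (fst r) lX dX)) \<and>
            (fst (s6v_rule (hh (cls lX dX lX' dX' lE dE lE' dE') r) lE' dE') \<and>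
             \<not> fst (s6v_rule (hh (cls lX dX lX' dX' lE dE lE' dE') r) lE dE)))"
proof -
  obtain b1 b2 e c f d f' where r: "r = ((b1, b2), e, c, f, d, f')" by (cases r) auto
  show ?thesis using assms unfolding r
    by (cases lX; cases dX; cases lX'; cases dX'; cases lE; cases dE; cases lE'; cases dE')
       (simp_all add: hh_def hA_def hB_def hC_def cls_def)
qed


definition dR :: "(nat \<times> nat) set \<Rightarrow> (nat \<times> nat \<Rightarrow> bool \<times> bool) \<Rightarrow> (nat \<times> nat) set \<Rightarrow> (nat \<times> nat \<Rightarrow> bool \<times> bool) \<Rightarrow> nat \<times> nat \<Rightarrow> bool" where
  "dR B c B' c' v \<longleftrightarrow> 1 \<le> snd v \<and> (if fst v = 0 then (0, snd v) \<in> B' \<and> (0, snd v) \<notin> B else fst (c' v) \<and> \<not> fst (c v))"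
definition dU :: "(nat \<times> nat) set \<Rightarrow> (nat \<times> nat \<Rightarrow> bool \<times> bool) \<Rightarrow> (nat \<times> nat) set \<Rightarrow> (nat \<times> nat \<Rightarrow> bool \<times> bool) \<Rightarrow> nat \<times> nat \<Rightarrow> bool" where
  "dU B c B' c' v \<longleftrightarrow> 1 \<le> fst v \<and> (if snd v = 0 then (fst v, 0) \<in> B' \<and> (fst v, 0) \<notin> B else snd (c' v) \<and> \<not> snd (c v))"

lemma inL_disc: "1 \<le> i \<Longrightarrow> 1 \<le> j \<Longrightarrow> (inL B' c' (i, j) \<and> \<not> inL B c (i, j)) = dR B c B' c' (i - 1, j)"
  by (auto simp: inL_def dR_def)
lemma inD_disc: "1 \<le> i \<Longrightarrow> 1 \<le> j \<Longrightarrow> (inD B' c' (i, j) \<and> \<not> inD B c (i, j)) = dU B c B' c' (i, j - 1)"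
  by (auto simp: inD_def dU_def)

lemma scp_cases:
  assumes "B' \<subseteq> boundary_vertices" "p \<in> scp_vertices B c B' c'"
  shows "dR B c B' c' p \<or> dU B c B' c' p \<or> (1 \<le> fst p \<and> 1 \<le> snd p \<and> (dR B c B' c' (fst p - 1, snd p) \<or> dU B c B' c' (fst p, snd p - 1)))"
proof -
  from assms(2) obtain e where e: "e \<in> s6v_edges B' c'" "e \<notin> s6v_edges B c" "p = fst e \<or> p = snd e"
    unfolding scp_vertices_def by blast
  from e(1) consider (a) j where "e = ((0, j), (1, j))" "(0, j) \<in> B'"
    | (b) i where "e = ((i, 0), (i, 1))" "(i, 0) \<in> B'"
    | (c) i j where "e = ((i, j), (i + 1, j))" "1 \<le> i" "1 \<le> j" "fst (c' (i, j))"
    | (d) i j where "e = ((i, j), (i, j + 1))" "1 \<le> i" "1 \<le> j" "snd (c' (i, j))"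
    unfolding s6v_edges_def by blast
  then show ?thesis
  proof cases
    case (a j)
    have "(0, j) \<notin> B" using e(2) a unfolding s6v_edges_def by blast
    moreover have j1: "1 \<le> j" using a assms(1) unfolding boundary_vertices_def by auto
    ultimately have "dR B c B' c' (0, j)" using a by (simp add: dR_def)
    then show ?thesis using e(3) a j1 by auto
  next
    case (b i)
    have "(i, 0) \<notin> B" using e(2) b unfolding s6v_edges_def by blast
    moreover have i1: "1 \<le> i" using b assms(1) unfolding boundary_vertices_def by auto
    ultimately have "dU B c B' c' (i, 0)" using b by (simp add: dU_def)
    then show ?thesis using e(3) b i1 by auto
  next
    case (c i j)
    have "\<not> fst (c (i, j))" using e(2) c unfolding s6v_edges_def by blast
    then have "dR B c B' c' (i, j)" using c by (simp add: dR_def)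
    then show ?thesis using e(3) c by auto
  next
    case (d i j)
    have "\<not> snd (c (i, j))" using e(2) d unfolding s6v_edges_def by blast
    then have "dU B c B' c' (i, j)" using d by (simp add: dU_def)
    then show ?thesis using e(3) d by auto
  qed
qed


locale s6pair =
  fixes B B' :: "(nat \<times> nat) set" and c c' :: "nat \<times> nat \<Rightarrow> bool \<times> bool"
    and \<omega> :: "nat \<times> nat \<Rightarrow> bool \<times> bool" and v0 :: "nat \<times> nat"
  assumes eq: "\<And>i j. 1 \<le> i \<Longrightarrow> 1 \<le> j \<Longrightarrow> c (i, j) = s6v_rule (\<omega> (i, j)) (inL B c (i, j)) (inD B c (i, j))"
    and eq': "\<And>i j. 1 \<le> i \<Longrightarrow> 1 \<le> j \<Longrightarrow> c' (i, j) = s6v_rule (\<omega> (i, j)) (inL B' c' (i, j)) (inD B' c' (i, j))"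
    and B': "B' = insert v0 B" and v0B: "v0 \<notin> B" and v0b: "v0 \<in> boundary_vertices"
    and Bb: "B \<subseteq> boundary_vertices"
begin

abbreviation "DR \<equiv> dR B c B' c'"
abbreviation "DU \<equiv> dU B c B' c'"
abbreviation Od :: "nat \<times> nat \<Rightarrow> bool" where "Od u \<equiv> DR u \<or> DU u"

lemma mono: "1 \<le> i \<Longrightarrow> 1 \<le> j \<Longrightarrow> le2 (c (i, j)) (c' (i, j))"
proof (induction "i + j" arbitrary: i j rule: less_induct)
  case less
  have l: "inL B c (i, j) \<longrightarrow> inL B' c' (i, j)"
  proof (cases "i = 1")
    case True then show ?thesis by (simp add: inL_def B')
  next
    case False
    then have "le2 (c (i - 1, j)) (c' (i - 1, j))" using less by (intro less.hyps) auto
    then show ?thesis using False by (simp add: inL_def le2_def)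
  qed
  have d: "inD B c (i, j) \<longrightarrow> inD B' c' (i, j)"
  proof (cases "j = 1")
    case True then show ?thesis by (simp add: inD_def B')
  next
    case False
    then have "le2 (c (i, j - 1)) (c' (i, j - 1))" using less by (intro less.hyps) auto
    then show ?thesis using False by (simp add: inD_def le2_def)
  qed
  show ?case unfolding eq[OF less.prems] eq'[OF less.prems] by (rule rule_mono[OF l d])
qed

lemma inmono: "1 \<le> i \<Longrightarrow> 1 \<le> j \<Longrightarrow> (inL B c (i, j) \<longrightarrow> inL B' c' (i, j)) \<and> (inD B c (i, j) \<longrightarrow> inD B' c' (i, j))"
proof -
  assume ij: "1 \<le> i" "1 \<le> j"
  have l: "inL B c (i, j) \<longrightarrow> inL B' c' (i, j)"
  proof (cases "i = 1")
    case True then show ?thesis by (simp add: inL_def B')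
  next
    case False
    then have "le2 (c (i - 1, j)) (c' (i - 1, j))" using ij by (intro mono) auto
    then show ?thesis using False by (simp add: inL_def le2_def)
  qed
  have d: "inD B c (i, j) \<longrightarrow> inD B' c' (i, j)"
  proof (cases "j = 1")
    case True then show ?thesis by (simp add: inD_def B')
  next
    case False
    then have "le2 (c (i, j - 1)) (c' (i, j - 1))" using ij by (intro mono) auto
    then show ?thesis using False by (simp add: inD_def le2_def)
  qed
  show ?thesis using l d by simp
qed

lemma DR_int: "1 \<le> i \<Longrightarrow> 1 \<le> j \<Longrightarrow> DR (i, j) \<longleftrightarrow> fst (c' (i, j)) \<and> \<not> fst (c (i, j))"
  by (simp add: dR_def)
lemma DU_int: "1 \<le> i \<Longrightarrow> 1 \<le> j \<Longrightarrow> DU (i, j) \<longleftrightarrow> snd (c' (i, j)) \<and> \<not> snd (c (i, j))"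
  by (simp add: dU_def)

lemma O_interior: "1 \<le> i \<Longrightarrow> 1 \<le> j \<Longrightarrow> Od (i, j) \<longleftrightarrow> DR (i - 1, j) \<or> DU (i, j - 1)"
  using rule_disc(1)[of "inL B c (i, j)" "inL B' c' (i, j)" "inD B c (i, j)" "inD B' c' (i, j)" "\<omega> (i, j)"]
    inmono[of i j]
  by (simp add: DR_int DU_int eq eq' inL_disc inD_disc)

lemma one_interior: "1 \<le> i \<Longrightarrow> 1 \<le> j \<Longrightarrow> DR (i - 1, j) \<noteq> DU (i, j - 1) \<Longrightarrow> \<not> (DR (i, j) \<and> DU (i, j))"
  using rule_disc(2)[of "inL B c (i, j)" "inL B' c' (i, j)" "inD B c (i, j)" "inD B' c' (i, j)" "\<omega> (i, j)"]
    inmono[of i j]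
  by (simp add: DR_int DU_int eq eq' inL_disc inD_disc)

lemma O_boundary: "fst u = 0 \<or> snd u = 0 \<Longrightarrow> Od u \<longleftrightarrow> u = v0"
  using v0b v0B unfolding B' boundary_vertices_def
  by (cases u) (auto simp: dR_def dU_def)

lemma v0_one: "\<not> (DR v0 \<and> DU v0)"
  using v0b unfolding boundary_vertices_def by (auto simp: dR_def dU_def)

lemma O_rank: "Od u \<Longrightarrow> fst v0 + snd v0 \<le> fst u + snd u"
proof (induction "fst u + snd u" arbitrary: u rule: less_induct)
  case less
  obtain i j where u: "u = (i, j)" by (cases u)
  show ?case
  proof (cases "i = 0 \<or> j = 0")
    case True then show ?thesis using O_boundary[of u] less.prems by (simp add: u)
  next
    case False
    then have ij: "1 \<le> i" "1 \<le> j" by auto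
    have "DR (i - 1, j) \<or> DU (i, j - 1)" using O_interior[OF ij] less.prems by (simp add: u)
    then show ?thesis
    proof
      assume "DR (i - 1, j)"
      then have "fst v0 + snd v0 \<le> fst (i - 1, j) + snd (i - 1, j)" using ij by (intro less.hyps) (auto simp: u)
      then show ?thesis using ij by (simp add: u)
    next
      assume "DU (i, j - 1)"
      then have "fst v0 + snd v0 \<le> fst (i, j - 1) + snd (i, j - 1)" using ij by (intro less.hyps) (auto simp: u)
      then show ?thesis using ij by (simp add: u)
    qed
  qed
qed

lemma US: "(\<forall>u w. fst u + snd u = n \<longrightarrow> fst w + snd w = n \<longrightarrow> Od u \<longrightarrow> Od w \<longrightarrow> u = w)
         \<and> (\<forall>u. fst u + snd u = n \<longrightarrow> \<not> (DR u \<and> DU u))"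
proof (induction n)
  case 0
  have "\<not> Od u" if "fst u + snd u = 0" for u
  proof -
    have "u = (0, 0)" using that by (cases u) auto
    moreover have "v0 \<noteq> (0, 0)" using v0b by (auto simp: boundary_vertices_def)
    ultimately show ?thesis using O_boundary[of u] by auto
  qed
  then have h: "\<not> DR u" "\<not> DU u" if "fst u + snd u = 0" for u using that by auto
  show ?case using h by auto
next
  case (Suc n)
  have U: "\<And>u w. fst u + snd u = n \<Longrightarrow> fst w + snd w = n \<Longrightarrow> Od u \<Longrightarrow> Od w \<Longrightarrow> u = w"
    and S: "\<And>u. fst u + snd u = n \<Longrightarrow> \<not> (DR u \<and> DU u)" using Suc.IH by blast+
  have pred: "(DR (i - 1, j) \<and> \<not> DU (i, j - 1)) \<or> (DU (i, j - 1) \<and> \<not> DR (i - 1, j))"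
    if "1 \<le> i" "1 \<le> j" "i + j = Suc n" "Od (i, j)" for i j
  proof -
    have "DR (i - 1, j) \<or> DU (i, j - 1)" using O_interior that by blast
    moreover have "\<not> (DR (i - 1, j) \<and> DU (i, j - 1))"
    proof
      assume "DR (i - 1, j) \<and> DU (i, j - 1)"
      then have "(i - 1, j) = (i, j - 1)" using that by (intro U) auto
      then show False using that by auto
    qed
    ultimately show ?thesis by blast
  qed
  have Un: "u = w" if "fst u + snd u = Suc n" "fst w + snd w = Suc n" "Od u" "Od w" for u w
  proof -
    obtain i j where u: "u = (i, j)" by (cases u)
    obtain k l where w: "w = (k, l)" by (cases w)
    show ?thesis
    proof (cases "i = 0 \<or> j = 0")
      case True
      then have uv: "u = v0" using O_boundary[of u] that by (simp add: u)
      show ?thesis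
      proof (cases "k = 0 \<or> l = 0")
        case True then show ?thesis using O_boundary[of w] that uv by (simp add: w)
      next
        case False
        then have kl: "1 \<le> k" "1 \<le> l" by auto
        have "DR (k - 1, l) \<or> DU (k, l - 1)" using O_interior[OF kl] that by (simp add: w)
        then have "fst v0 + snd v0 \<le> k + l - 1" using O_rank[of "(k - 1, l)"] O_rank[of "(k, l - 1)"] kl by auto
        then show ?thesis using that uv w kl by simp
      qed
    next
      case False
      then have ij: "1 \<le> i" "1 \<le> j" by auto
      show ?thesis
      proof (cases "k = 0 \<or> l = 0")
        case True
        then have wv: "w = v0" using O_boundary[of w] that by (simp add: w)
        have "DR (i - 1, j) \<or> DU (i, j - 1)" using O_interior[OF ij] that by (simp add: u)
        then have "fst v0 + snd v0 \<le> i + j - 1" using O_rank[of "(i - 1, j)"] O_rank[of "(i, j - 1)"] ij by auto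
        then show ?thesis using that wv u ij by simp
      next
        case False
        then have kl: "1 \<le> k" "1 \<le> l" by auto
        have pu: "(DR (i - 1, j) \<and> \<not> DU (i, j - 1)) \<or> (DU (i, j - 1) \<and> \<not> DR (i - 1, j))"
          using pred[OF ij] that by (simp add: u)
        have pw: "(DR (k - 1, l) \<and> \<not> DU (k, l - 1)) \<or> (DU (k, l - 1) \<and> \<not> DR (k - 1, l))"
          using pred[OF kl] that by (simp add: w)
        have r: "i + j = Suc n" "k + l = Suc n" using that u w by auto
        show ?thesis
        proof -
          { assume a: "DR (i - 1, j)" "DR (k - 1, l)"
            then have "(i - 1, j) = (k - 1, l)" using r ij kl by (intro U) auto
            then have ?thesis using ij kl u w by auto }
          moreover
          { assume a: "DU (i, j - 1)" "DU (k, l - 1)"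
            then have "(i, j - 1) = (k, l - 1)" using r ij kl by (intro U) auto
            then have ?thesis using ij kl u w by auto }
          moreover
          { assume a: "DR (i - 1, j)" "DU (k, l - 1)"
            then have e: "(i - 1, j) = (k, l - 1)" using r ij kl by (intro U) auto
            then have False using S[of "(i - 1, j)"] a r ij by auto }
          moreover
          { assume a: "DU (i, j - 1)" "DR (k - 1, l)"
            then have e: "(i, j - 1) = (k - 1, l)" using r ij kl by (intro U) auto
            then have False using S[of "(i, j - 1)"] a r ij by auto }
          ultimately show ?thesis using pu pw by blast
        qed
      qed
    qed
  qed
  have Sn: "\<not> (DR u \<and> DU u)" if "fst u + snd u = Suc n" for u
  proof
    assume a: "DR u \<and> DU u"
    obtain i j where u: "u = (i, j)" by (cases u)
    show False
    proof (cases "i = 0 \<or> j = 0")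
      case True
      then have "u = v0" using O_boundary[of u] a by (simp add: u)
      then show False using v0_one a by simp
    next
      case False
      then have ij: "1 \<le> i" "1 \<le> j" by auto
      have "(DR (i - 1, j) \<and> \<not> DU (i, j - 1)) \<or> (DU (i, j - 1) \<and> \<not> DR (i - 1, j))"
        using pred[OF ij] that a by (simp add: u)
      then have "DR (i - 1, j) \<noteq> DU (i, j - 1)" by blast
      then show False using one_interior[OF ij] a by (simp add: u)
    qed
  qed
  show ?case using Un Sn by blast
qed

lemma exactly_one_in:
  assumes "1 \<le> i" "1 \<le> j" "Od (i, j)"
  shows "DR (i - 1, j) \<noteq> DU (i, j - 1)"
proof -
  have "DR (i - 1, j) \<or> DU (i, j - 1)" using O_interior assms by blast
  moreover have "\<not> (DR (i - 1, j) \<and> DU (i, j - 1))"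
  proof
    assume a: "DR (i - 1, j) \<and> DU (i, j - 1)"
    have U: "\<And>u w. fst u + snd u = i + j - 1 \<Longrightarrow> fst w + snd w = i + j - 1 \<Longrightarrow> Od u \<Longrightarrow> Od w \<Longrightarrow> u = w"
      using US[of "i + j - 1"] by blast
    have "(i - 1, j) = (i, j - 1)" using assms a by (intro U) auto
    then show False using assms by auto
  qed
  ultimately show ?thesis by blast
qed

lemma scp_O: "p \<in> scp_vertices B c B' c' \<Longrightarrow> Od p"
proof -
  assume p: "p \<in> scp_vertices B c B' c'"
  have Bb': "B' \<subseteq> boundary_vertices" using Bb v0b B' by auto
  obtain i j where pij: "p = (i, j)" by (cases p)
  from scp_cases[OF Bb' p] show "Od p"
  proof (elim disjE conjE)
    assume "1 \<le> fst p" "1 \<le> snd p" "DR (fst p - 1, snd p)"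
    then show ?thesis using O_interior[of i j] by (simp add: pij)
  next
    assume "1 \<le> fst p" "1 \<le> snd p" "DU (fst p, snd p - 1)"
    then show ?thesis using O_interior[of i j] by (simp add: pij)
  qed auto
qed

end



locale s6four = X: s6pair BX BX' cX cX' \<omega>X v0 + E: s6pair BE BE' cE cE' \<omega>E v0
  for BX BX' cX cX' \<omega>X v0 BE BE' cE cE' \<omega>E +
  fixes x :: "nat \<times> nat \<Rightarrow> rx"
  assumes \<omega>X: "\<And>v. \<omega>X v = fst (x v)"
    and \<omega>E: "\<And>v. \<omega>E v = hh (cls (inL BX cX v) (inD BX cX v) (inL BX' cX' v) (inD BX' cX' v)
                              (inL BE cE v) (inD BE cE v) (inL BE' cE' v) (inD BE' cE' v)) (x v)"
    and BEX: "BE \<subseteq> BX"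
begin

lemma ORD: "1 \<le> i \<Longrightarrow> 1 \<le> j \<Longrightarrow> le2 (cE (i, j)) (cX (i, j)) \<and> le2 (cE' (i, j)) (cX' (i, j))"
proof (induction "i + j" arbitrary: i j rule: less_induct)
  case less
  have l: "(inL BE cE (i, j) \<longrightarrow> inL BX cX (i, j)) \<and> (inL BE' cE' (i, j) \<longrightarrow> inL BX' cX' (i, j))"
  proof (cases "i = 1")
    case True then show ?thesis using BEX X.B' E.B' by (auto simp: inL_def)
  next
    case False
    then have "le2 (cE (i - 1, j)) (cX (i - 1, j)) \<and> le2 (cE' (i - 1, j)) (cX' (i - 1, j))"
      using less by (intro less.hyps) auto
    then show ?thesis using False by (simp add: inL_def le2_def)
  qed
  have d: "(inD BE cE (i, j) \<longrightarrow> inD BX cX (i, j)) \<and> (inD BE' cE' (i, j) \<longrightarrow> inD BX' cX' (i, j))"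
  proof (cases "j = 1")
    case True then show ?thesis using BEX X.B' E.B' by (auto simp: inD_def)
  next
    case False
    then have "le2 (cE (i, j - 1)) (cX (i, j - 1)) \<and> le2 (cE' (i, j - 1)) (cX' (i, j - 1))"
      using less by (intro less.hyps) auto
    then show ?thesis using False by (simp add: inD_def le2_def)
  qed
  show ?case
    unfolding X.eq[OF less.prems] X.eq'[OF less.prems] E.eq[OF less.prems] E.eq'[OF less.prems] \<omega>X \<omega>E
    using X.inmono[OF less.prems] E.inmono[OF less.prems] l d
    by (intro rule_order) auto
qed

lemma INORD: "1 \<le> i \<Longrightarrow> 1 \<le> j \<Longrightarrow>
   (inL BE cE (i, j) \<longrightarrow> inL BX cX (i, j)) \<and> (inL BE' cE' (i, j) \<longrightarrow> inL BX' cX' (i, j)) \<and>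
   (inD BE cE (i, j) \<longrightarrow> inD BX cX (i, j)) \<and> (inD BE' cE' (i, j) \<longrightarrow> inD BX' cX' (i, j))"
proof -
  assume ij: "1 \<le> i" "1 \<le> j"
  have l: "(inL BE cE (i, j) \<longrightarrow> inL BX cX (i, j)) \<and> (inL BE' cE' (i, j) \<longrightarrow> inL BX' cX' (i, j))"
  proof (cases "i = 1")
    case True then show ?thesis using BEX X.B' E.B' by (auto simp: inL_def)
  next
    case False
    then have "le2 (cE (i - 1, j)) (cX (i - 1, j)) \<and> le2 (cE' (i - 1, j)) (cX' (i - 1, j))"
      using ij by (intro ORD) auto
    then show ?thesis using False by (simp add: inL_def le2_def)
  qed
  have d: "(inD BE cE (i, j) \<longrightarrow> inD BX cX (i, j)) \<and> (inD BE' cE' (i, j) \<longrightarrow> inD BX' cX' (i, j))"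
  proof (cases "j = 1")
    case True then show ?thesis using BEX X.B' E.B' by (auto simp: inD_def)
  next
    case False
    then have "le2 (cE (i, j - 1)) (cX (i, j - 1)) \<and> le2 (cE' (i, j - 1)) (cX' (i, j - 1))"
      using ij by (intro ORD) auto
    then show ?thesis using False by (simp add: inD_def le2_def)
  qed
  show ?thesis using l d by blast
qed

lemma NOTUR:
  assumes XU: "X.DU p" and ER: "E.DR p" and XO: "X.Od p" and EO: "E.Od p"
    and IHp: "\<And>a b. fst a + snd a = fst p + snd p - 1 \<Longrightarrow> fst b + snd b = fst p + snd p - 1 \<Longrightarrow>
                X.Od a \<Longrightarrow> E.Od b \<Longrightarrow> fst b \<le> fst a"
  shows False
proof -
  obtain a b where p: "p = (a, b)" by (cases p)
  have a1: "1 \<le> a" using XU by (simp add: p dU_def)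
  have b1: "1 \<le> b" using ER by (simp add: p dR_def)
  have ox: "X.DR (a - 1, b) \<noteq> X.DU (a, b - 1)" using X.exactly_one_in[OF a1 b1] XO by (simp add: p)
  have oe: "E.DR (a - 1, b) \<noteq> E.DU (a, b - 1)" using E.exactly_one_in[OF a1 b1] EO by (simp add: p)
  have nle: "\<not> (X.DR (a - 1, b) \<and> E.DU (a, b - 1))"
  proof
    assume h: "X.DR (a - 1, b) \<and> E.DU (a, b - 1)"
    have "fst (a, b - 1) \<le> fst (a - 1, b)" using h a1 b1 by (intro IHp) (auto simp: p)
    then show False using a1 by simp
  qed
  have ord: "inL BE cE (a, b) \<longrightarrow> inL BX cX (a, b)" "inD BE cE (a, b) \<longrightarrow> inD BX cX (a, b)"
            "inL BE' cE' (a, b) \<longrightarrow> inL BX' cX' (a, b)" "inD BE' cE' (a, b) \<longrightarrow> inD BX' cX' (a, b)"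
    using INORD[OF a1 b1] by auto
  have f9: "(inL BX' cX' (a, b) \<and> \<not> inL BX cX (a, b)) \<noteq> (inD BX' cX' (a, b) \<and> \<not> inD BX cX (a, b))"
    using ox by (simp add: inL_disc[OF a1 b1] inD_disc[OF a1 b1])
  have f10: "(inL BE' cE' (a, b) \<and> \<not> inL BE cE (a, b)) \<noteq> (inD BE' cE' (a, b) \<and> \<not> inD BE cE (a, b))"
    using oe by (simp add: inL_disc[OF a1 b1] inD_disc[OF a1 b1])
  have f11: "\<not> ((inL BX' cX' (a, b) \<and> \<not> inL BX cX (a, b)) \<and> (inD BE' cE' (a, b) \<and> \<not> inD BE cE (a, b)))"
    using nle by (simp add: inL_disc[OF a1 b1] inD_disc[OF a1 b1])
  have "\<not> (X.DU (a, b) \<and> E.DR (a, b))"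
    unfolding X.DU_int[OF a1 b1] E.DR_int[OF a1 b1] X.eq[OF a1 b1] X.eq'[OF a1 b1] E.eq[OF a1 b1] E.eq'[OF a1 b1] \<omega>X \<omega>E
    by (rule rule_Q[OF ord(1) ord(2) ord(3) ord(4) X.inmono[OF a1 b1, THEN conjunct1]
          X.inmono[OF a1 b1, THEN conjunct2] E.inmono[OF a1 b1, THEN conjunct1]
          E.inmono[OF a1 b1, THEN conjunct2] f9 f10 f11])
  then show False using XU ER by (simp add: p)
qed

lemma pred_X:
  assumes "1 \<le> i" "1 \<le> j" "X.Od (i, j)"
  obtains p where "X.Od p" "fst p + snd p = i + j - 1"
    "(X.DR p \<and> (i, j) = (fst p + 1, snd p)) \<or> (X.DU p \<and> (i, j) = (fst p, snd p + 1))"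
proof -
  have "X.DR (i - 1, j) \<or> X.DU (i, j - 1)" using X.O_interior assms by blast
  then show ?thesis
  proof
    assume h: "X.DR (i - 1, j)"
    show ?thesis by (rule that[of "(i - 1, j)"]) (use h assms in auto)
  next
    assume h: "X.DU (i, j - 1)"
    show ?thesis by (rule that[of "(i, j - 1)"]) (use h assms in auto)
  qed
qed

lemma pred_E:
  assumes "1 \<le> i" "1 \<le> j" "E.Od (i, j)"
  obtains p where "E.Od p" "fst p + snd p = i + j - 1"
    "(E.DR p \<and> (i, j) = (fst p + 1, snd p)) \<or> (E.DU p \<and> (i, j) = (fst p, snd p + 1))"
proof -
  have "E.DR (i - 1, j) \<or> E.DU (i, j - 1)" using E.O_interior assms by blast
  then show ?thesis
  proof
    assume h: "E.DR (i - 1, j)"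
    show ?thesis by (rule that[of "(i - 1, j)"]) (use h assms in auto)
  next
    assume h: "E.DU (i, j - 1)"
    show ?thesis by (rule that[of "(i, j - 1)"]) (use h assms in auto)
  qed
qed

lemma CQ: "fst u + snd u = n \<Longrightarrow> fst w + snd w = n \<Longrightarrow> X.Od u \<Longrightarrow> E.Od w \<Longrightarrow> fst w \<le> fst u"
proof (induction n arbitrary: u w rule: less_induct)
  case (less n)
  obtain i j where u: "u = (i, j)" by (cases u)
  obtain k l where w: "w = (k, l)" by (cases w)
  show ?case
  proof (cases "i = 0 \<or> j = 0")
    case True
    then have uv: "u = v0" using X.O_boundary[of u] less.prems by (simp add: u)
    show ?thesis
    proof (cases "k = 0 \<or> l = 0")
      case True then have "w = v0" using E.O_boundary[of w] less.prems by (simp add: w)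
      then show ?thesis using uv by simp
    next
      case False
      then have kl: "1 \<le> k" "1 \<le> l" by auto
      obtain r where r: "E.Od r" "fst r + snd r = k + l - 1" using pred_E[OF kl] less.prems by (metis w)
      have "fst v0 + snd v0 \<le> fst r + snd r" by (rule E.O_rank[OF r(1)])
      then show ?thesis using r(2) uv less.prems kl w by simp
    qed
  next
    case False
    then have ij: "1 \<le> i" "1 \<le> j" by auto
    show ?thesis
    proof (cases "k = 0 \<or> l = 0")
      case True then have wv: "w = v0" using E.O_boundary[of w] less.prems by (simp add: w)
      obtain p where p: "X.Od p" "fst p + snd p = i + j - 1" using pred_X[OF ij] less.prems by (metis u)
      have "fst v0 + snd v0 \<le> fst p + snd p" by (rule X.O_rank[OF p(1)])
      then show ?thesis using p(2) wv less.prems ij u by simp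
    next
      case False
      then have kl: "1 \<le> k" "1 \<le> l" by auto
      obtain p where p: "X.Od p" "fst p + snd p = i + j - 1"
        "(X.DR p \<and> (i, j) = (fst p + 1, snd p)) \<or> (X.DU p \<and> (i, j) = (fst p, snd p + 1))"
        using pred_X[OF ij] less.prems by (metis u)
      obtain r where r: "E.Od r" "fst r + snd r = k + l - 1"
        "(E.DR r \<and> (k, l) = (fst r + 1, snd r)) \<or> (E.DU r \<and> (k, l) = (fst r, snd r + 1))"
        using pred_E[OF kl] less.prems by (metis w)
      have n: "i + j = n" "k + l = n" using less.prems u w by auto
      have IH: "fst r \<le> fst p" using n ij p r by (intro less.IH[of "n - 1"]) auto
      show ?thesis
      proof (cases "fst r < fst p")
        case True then show ?thesis using p(3) r(3) u w by auto
      next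
        case False
        then have fe: "fst r = fst p" using IH by simp
        then have rp: "r = p" using p(2) r(2) n by (simp add: prod_eq_iff)
        show ?thesis
        proof (cases "X.DR p \<and> (i, j) = (fst p + 1, snd p)")
          case True then show ?thesis using r(3) fe u w by auto
        next
          case False
          then have pu: "X.DU p" "(i, j) = (fst p, snd p + 1)" using p(3) by auto
          show ?thesis
          proof (cases "E.DU r \<and> (k, l) = (fst r, snd r + 1)")
            case True then show ?thesis using pu fe u w by auto
          next
            case False
            then have "E.DR p" using r(3) rp by auto
            have False
            proof (rule NOTUR[OF pu(1) \<open>E.DR p\<close> p(1)])
              show "E.Od p" using r(1) rp by simp
              fix a b assume "fst a + snd a = fst p + snd p - 1" "fst b + snd b = fst p + snd p - 1"
                "X.Od a" "E.Od b"
              then show "fst b \<le> fst a" using p(2) n ij by (intro less.IH[of "n - 2"]) auto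
            qed
            then show ?thesis ..
          qed
        qed
      qed
    qed
  qed
qed

lemma scp_order:
  assumes "p \<in> scp_vertices BX cX BX' cX'" "q \<in> scp_vertices BE cE BE' cE'" "fst p + snd p = fst q + snd q"
  shows "fst q \<le> fst p"
  using CQ[OF refl assms(3)[symmetric] X.scp_O[OF assms(1)] E.scp_O[OF assms(2)]] .

end



lemma coord_pred:
  assumes g: "g \<in> measurable M cfg_space"
  shows "Measurable.pred M (\<lambda>y. P (g y v))"
proof -
  have c: "(\<lambda>x. x v) \<in> measurable cfg_space (count_space UNIV)"
    unfolding cfg_space_def by (rule measurable_component_singleton) simp
  have h: "(\<lambda>y. g y v) \<in> measurable M (count_space UNIV)"
    using measurable_compose[OF g c] by simp
  have "{y \<in> space M. P (g y v)} = (\<lambda>y. g y v) -` {a. P a} \<inter> space M" by auto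
  also have "\<dots> \<in> sets M" using measurable_sets[OF h, of "{a. P a}"] by simp
  finally show ?thesis unfolding pred_def .
qed

lemma coord_fst[measurable]: "g \<in> measurable M cfg_space \<Longrightarrow> Measurable.pred M (\<lambda>y. fst (g y v))"
  by (rule coord_pred)
lemma coord_snd[measurable]: "g \<in> measurable M cfg_space \<Longrightarrow> Measurable.pred M (\<lambda>y. snd (g y v))"
  by (rule coord_pred)

lemma pred_dR[measurable]:
  assumes "g \<in> measurable M (cfg_space \<Otimes>\<^sub>M cfg_space)"
  shows "Measurable.pred M (\<lambda>y. dR B (fst (g y)) B' (snd (g y)) v)"
  unfolding dR_def using assms by measurable

lemma pred_dU[measurable]:
  assumes "g \<in> measurable M (cfg_space \<Otimes>\<^sub>M cfg_space)"
  shows "Measurable.pred M (\<lambda>y. dU B (fst (g y)) B' (snd (g y)) v)"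
  unfolding dU_def using assms by measurable


lemma finr: "finite {w::nat \<times> nat. fst w + snd w \<le> N}"
  by (rule finite_subset[of _ "{0..N} \<times> {0..N}"]) auto

lemma out_meas: "s6v_out B \<in> measurable (PiM UNIV (\<lambda>_. measure_pmf (pp :: (bool \<times> bool) pmf))) cfg_space"
proof -
  have "(\<lambda>\<omega> v. s6v_out B \<omega> v) \<in> measurable (PiM UNIV (\<lambda>_. measure_pmf pp)) (PiM UNIV (\<lambda>_. count_space UNIV))"
  proof (rule measurable_PiM_single')
    fix v :: "nat \<times> nat"
    show "(\<lambda>\<omega>. s6v_out B \<omega> v) \<in> measurable (PiM UNIV (\<lambda>_. measure_pmf pp)) (count_space UNIV)"
      by (rule fin_dep_measurable[OF finr[of "fst v + snd v"]]) (rule loc_out, auto)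
  qed (simp add: space_PiM)
  then show ?thesis unfolding cfg_space_def by simp
qed

theorem proposition4p1:
  fixes \<delta>1 \<delta>2 :: real and Bxi Beta :: "(nat \<times> nat) set" and v0 :: "nat \<times> nat"
  assumes "0 \<le> \<delta>2" and "\<delta>2 < \<delta>1" and "\<delta>1 < 1" and "\<delta>2 \<le> 1/2"
    and "boundary_config Bxi" and "boundary_config Beta" and "Beta \<subseteq> Bxi"
    and "v0 \<in> boundary_vertices" and "v0 \<notin> Bxi" and "v0 \<notin> Beta"
  shows "\<exists>\<mu>. prob_space \<mu>
    \<and> sets \<mu> = sets ((cfg_space \<Otimes>\<^sub>M cfg_space) \<Otimes>\<^sub>M (cfg_space \<Otimes>\<^sub>M cfg_space))
    \<and> distr \<mu> (cfg_space \<Otimes>\<^sub>M cfg_space) fst = basic_coupling \<delta>1 \<delta>2 Bxi (insert v0 Bxi)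
    \<and> distr \<mu> (cfg_space \<Otimes>\<^sub>M cfg_space) snd = basic_coupling \<delta>1 \<delta>2 Beta (insert v0 Beta)
    \<and> (AE x in \<mu>. \<forall>n p q.
          p \<in> scp_vertices Bxi (fst (fst x)) (insert v0 Bxi) (snd (fst x))
        \<and> q \<in> scp_vertices Beta (fst (snd x)) (insert v0 Beta) (snd (snd x))
        \<and> fst p + snd p = n \<and> fst q + snd q = n
        \<longrightarrow> fst q \<le> fst p)"
proof -
  define Bx' where "Bx' = insert v0 Bxi"
  define Be' where "Be' = insert v0 Beta"
  define q where "q = qd \<delta>1 \<delta>2"
  define pp where "pp = pair_pmf (bernoulli_pmf \<delta>1) (bernoulli_pmf \<delta>2)"
  define P where "P = PiM UNIV (\<lambda>_::nat \<times> nat. measure_pmf q)"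
  define R where "R = PiM UNIV (\<lambda>_::nat \<times> nat. measure_pmf pp)"
  have R: "rand_space \<delta>1 \<delta>2 = R" by (simp add: rand_space_def R_def pp_def)
  define A where "A = (\<lambda>(x :: nat \<times> nat \<Rightarrow> rx) v. fst (x v))"
  define C where "C = (\<lambda>(x :: nat \<times> nat \<Rightarrow> rx) v. hh (stE Bxi Bx' Beta Be' v x) (x v))"
  have dlt: "0 \<le> \<delta>2" "\<delta>2 < \<delta>1" "\<delta>1 < 1" "\<delta>2 \<le> 1/2" using assms by auto
  have hq: "map_pmf (hh s) q = pp" for s unfolding q_def pp_def by (rule hh_pmf[OF dlt])
  have q0': "map_pmf (\<lambda>r. fst r) q = pp" unfolding q_def pp_def using q0 by simp
  have Adist: "distr P R A = R"
    using PiM_adaptive[of "\<lambda>w. fst w + snd w" "\<lambda>v x. ()" "\<lambda>_ r. fst r" q pp] q0' finr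
    unfolding P_def R_def A_def by simp
  have Ameas: "A \<in> measurable P R"
    using adaptive_measurable[of "\<lambda>w. fst w + snd w" "\<lambda>v x. ()" "\<lambda>_ r. fst r" q pp] finr
    unfolding P_def R_def A_def by simp
  have Cdist: "distr P R C = R"
    using PiM_adaptive[of "\<lambda>w. fst w + snd w" "stE Bxi Bx' Beta Be'" hh q pp, OF loc_st hq finr]
    unfolding P_def R_def C_def by simp
  have Cmeas: "C \<in> measurable P R"
    using adaptive_measurable[of "\<lambda>w. fst w + snd w" "stE Bxi Bx' Beta Be'" hh q pp, OF loc_st finr]
    unfolding P_def R_def C_def by simp
  define GX where "GX = (\<lambda>\<omega>. (s6v_out Bxi \<omega>, s6v_out Bx' \<omega>))"
  define GE where "GE = (\<lambda>\<omega>. (s6v_out Beta \<omega>, s6v_out Be' \<omega>))"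
  have GXm: "GX \<in> measurable R (cfg_space \<Otimes>\<^sub>M cfg_space)"
    unfolding GX_def R_def by (intro measurable_Pair out_meas)
  have GEm: "GE \<in> measurable R (cfg_space \<Otimes>\<^sub>M cfg_space)"
    unfolding GE_def R_def by (intro measurable_Pair out_meas)
  define F where "F = (\<lambda>x. (GX (A x), GE (C x)))"
  have Fm: "F \<in> measurable P ((cfg_space \<Otimes>\<^sub>M cfg_space) \<Otimes>\<^sub>M (cfg_space \<Otimes>\<^sub>M cfg_space))"
    unfolding F_def by (intro measurable_Pair measurable_compose[OF Ameas GXm] measurable_compose[OF Cmeas GEm])
  interpret PP: prob_space P unfolding P_def by (intro prob_space_PiM measure_pmf.prob_space_axioms)
  define \<mu> where "\<mu> = distr P ((cfg_space \<Otimes>\<^sub>M cfg_space) \<Otimes>\<^sub>M (cfg_space \<Otimes>\<^sub>M cfg_space)) F"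
  have ps: "prob_space \<mu>" unfolding \<mu>_def by (rule PP.prob_space_distr[OF Fm])
  have sets: "sets \<mu> = sets ((cfg_space \<Otimes>\<^sub>M cfg_space) \<Otimes>\<^sub>M (cfg_space \<Otimes>\<^sub>M cfg_space))"
    unfolding \<mu>_def by simp
  have m1: "distr \<mu> (cfg_space \<Otimes>\<^sub>M cfg_space) fst = basic_coupling \<delta>1 \<delta>2 Bxi (insert v0 Bxi)"
  proof -
    have "distr \<mu> (cfg_space \<Otimes>\<^sub>M cfg_space) fst = distr P (cfg_space \<Otimes>\<^sub>M cfg_space) (fst \<circ> F)"
      unfolding \<mu>_def by (rule distr_distr[OF measurable_fst Fm])
    also have "fst \<circ> F = GX \<circ> A" by (simp add: F_def fun_eq_iff)
    also have "distr P (cfg_space \<Otimes>\<^sub>M cfg_space) (GX \<circ> A) = distr (distr P R A) (cfg_space \<Otimes>\<^sub>M cfg_space) GX"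
      by (rule distr_distr[OF GXm Ameas, symmetric])
    also have "\<dots> = basic_coupling \<delta>1 \<delta>2 Bxi (insert v0 Bxi)"
      unfolding Adist basic_coupling_def R GX_def Bx'_def ..
    finally show ?thesis .
  qed
  have m2: "distr \<mu> (cfg_space \<Otimes>\<^sub>M cfg_space) snd = basic_coupling \<delta>1 \<delta>2 Beta (insert v0 Beta)"
  proof -
    have "distr \<mu> (cfg_space \<Otimes>\<^sub>M cfg_space) snd = distr P (cfg_space \<Otimes>\<^sub>M cfg_space) (snd \<circ> F)"
      unfolding \<mu>_def by (rule distr_distr[OF measurable_snd Fm])
    also have "snd \<circ> F = GE \<circ> C" by (simp add: F_def fun_eq_iff)
    also have "distr P (cfg_space \<Otimes>\<^sub>M cfg_space) (GE \<circ> C) = distr (distr P R C) (cfg_space \<Otimes>\<^sub>M cfg_space) GE"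
      by (rule distr_distr[OF GEm Cmeas, symmetric])
    also have "\<dots> = basic_coupling \<delta>1 \<delta>2 Beta (insert v0 Beta)"
      unfolding Cdist basic_coupling_def R GE_def Be'_def ..
    finally show ?thesis .
  qed
  define Psi where "Psi = (\<lambda>y::((nat \<times> nat \<Rightarrow> bool \<times> bool) \<times> (nat \<times> nat \<Rightarrow> bool \<times> bool)) \<times> ((nat \<times> nat \<Rightarrow> bool \<times> bool) \<times> (nat \<times> nat \<Rightarrow> bool \<times> bool)).
     \<forall>p q. (dR Bxi (fst (fst y)) Bx' (snd (fst y)) p \<or> dU Bxi (fst (fst y)) Bx' (snd (fst y)) p \<or>
             (1 \<le> fst p \<and> 1 \<le> snd p \<and> (dR Bxi (fst (fst y)) Bx' (snd (fst y)) (fst p - 1, snd p) \<or>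
                dU Bxi (fst (fst y)) Bx' (snd (fst y)) (fst p, snd p - 1)))) \<longrightarrow>
           (dR Beta (fst (snd y)) Be' (snd (snd y)) q \<or> dU Beta (fst (snd y)) Be' (snd (snd y)) q \<or>
             (1 \<le> fst q \<and> 1 \<le> snd q \<and> (dR Beta (fst (snd y)) Be' (snd (snd y)) (fst q - 1, snd q) \<or>
                dU Beta (fst (snd y)) Be' (snd (snd y)) (fst q, snd q - 1)))) \<longrightarrow>
           fst p + snd p = fst q + snd q \<longrightarrow> fst q \<le> fst p)"
  have Psim: "Measurable.pred ((cfg_space \<Otimes>\<^sub>M cfg_space) \<Otimes>\<^sub>M (cfg_space \<Otimes>\<^sub>M cfg_space)) Psi"
    unfolding Psi_def by measurable
  have PsiF: "Psi (F x)" for x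
  proof -
    define cX where "cX = s6v_out Bxi (A x)"
    define cX' where "cX' = s6v_out Bx' (A x)"
    define cE where "cE = s6v_out Beta (C x)"
    define cE' where "cE' = s6v_out Be' (C x)"
    have bc: "Bxi \<subseteq> boundary_vertices" "Beta \<subseteq> boundary_vertices"
      using assms by (auto simp: boundary_config_def)
    have sX: "s6pair Bxi Bx' cX cX' (A x) v0"
      by unfold_locales (use assms bc in \<open>auto simp: cX_def cX'_def Bx'_def s6v_out_eq\<close>)
    have sE: "s6pair Beta Be' cE cE' (C x) v0"
      by unfold_locales (use assms bc in \<open>auto simp: cE_def cE'_def Be'_def s6v_out_eq\<close>)
    have etaE: "(\<lambda>w. fst (etaOut Bxi Bx' Beta Be' x w)) = cE" "(\<lambda>w. snd (etaOut Bxi Bx' Beta Be' x w)) = cE'"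
      using eta_is_out[of Beta Bxi Bx' Be' x] by (auto simp: fun_eq_iff cE_def cE'_def C_def)
    have Ax: "(\<lambda>v. fst (x v)) = A x" by (simp add: A_def)
    interpret S: s6four Bxi Bx' cX cX' "A x" v0 Beta Be' cE cE' "C x" x
    proof (rule s6four.intro[OF sX sE], unfold_locales)
      show "A x v = fst (x v)" for v by (simp add: A_def)
      show "C x v = hh (cls (inL Bxi cX v) (inD Bxi cX v) (inL Bx' cX' v) (inD Bx' cX' v)
                              (inL Beta cE v) (inD Beta cE v) (inL Be' cE' v) (inD Be' cE' v)) (x v)" for v
        unfolding C_def stE_def etaE Ax cX_def cX'_def ..
      show "Beta \<subseteq> Bxi" using assms by simp
    qed
    have ZX: "S.X.Od p" if "S.X.DR p \<or> S.X.DU p \<or> (1 \<le> fst p \<and> 1 \<le> snd p \<and> (S.X.DR (fst p - 1, snd p) \<or> S.X.DU (fst p, snd p - 1)))" for p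
      using that S.X.O_interior[of "fst p" "snd p"] by auto
    have ZE: "S.E.Od p" if "S.E.DR p \<or> S.E.DU p \<or> (1 \<le> fst p \<and> 1 \<le> snd p \<and> (S.E.DR (fst p - 1, snd p) \<or> S.E.DU (fst p, snd p - 1)))" for p
      using that S.E.O_interior[of "fst p" "snd p"] by auto
    show ?thesis
      unfolding Psi_def F_def GX_def GE_def fst_conv snd_conv cX_def[symmetric] cX'_def[symmetric]
        cE_def[symmetric] cE'_def[symmetric]
      using S.CQ[OF refl _ ZX ZE] by metis
  qed
  have ae1: "AE y in \<mu>. Psi y"
    unfolding \<mu>_def using AE_distr_iff[OF Fm Psim[unfolded pred_def]] PsiF by simp
  have ae: "AE y in \<mu>. \<forall>n p q.
          p \<in> scp_vertices Bxi (fst (fst y)) (insert v0 Bxi) (snd (fst y))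
        \<and> q \<in> scp_vertices Beta (fst (snd y)) (insert v0 Beta) (snd (snd y))
        \<and> fst p + snd p = n \<and> fst q + snd q = n
        \<longrightarrow> fst q \<le> fst p"
  proof (rule eventually_mono[OF ae1], intro allI impI, elim conjE)
    fix y n p q assume Py: "Psi y"
      and p: "p \<in> scp_vertices Bxi (fst (fst y)) (insert v0 Bxi) (snd (fst y))"
      and q: "q \<in> scp_vertices Beta (fst (snd y)) (insert v0 Beta) (snd (snd y))"
      and n: "fst p + snd p = n" "fst q + snd q = n"
    have b1: "insert v0 Bxi \<subseteq> boundary_vertices" "insert v0 Beta \<subseteq> boundary_vertices"
      using assms by (auto simp: boundary_config_def)
    show "fst q \<le> fst p"
      using Py scp_cases[OF b1(1) p] scp_cases[OF b1(2) q] n unfolding Psi_def Bx'_def Be'_def by metis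
  qed
  show ?thesis using ps sets m1 m2 ae by blast
qed


end
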